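(* Consider the 2-user broadcast channel over $\mathbb F_3$ with inputs $X_1,X_2\in\mathbb F_3$, in which at each channel use a coefficient $G$ uniform on $\mathbb F_3^\times=\{1,-1\}$ is drawn, independent of the inputs and i.i.d. across channel uses, Rx-1 observes $\overline Y_1=X_1$ and Rx-2 observes $\overline Y_2=(GX_1+X_2,\,G)$. This channel is semi-deterministic, and its sum-capacities with and without NS-assistance are $$C_\Sigma^{\mathrm{NS}}=2\log_2 3,\qquad C_\Sigma=1.5\log_2 3,$$ so that $C_\Sigma^{\mathrm{NS}}/C_\Sigma=4/3$.
   Context: Coding framework: messages $W_1,W_2$ independent and uniform on finite sets $\mathcal M_1,\mathcal M_2$, the transmitter controls $(X_1,X_2)$. Classical scheme: stochastic encoder from messages to the $n$ input symbols and stochastic decoders $\hat W_k=\psi_k(\overline Y_k^{[n]})$. A $\kappa$-partite NS box is a conditional pmf of outputs given inputs (finite output alphabets) such that for every subset of parties the marginal of their outputs depends only on their inputs. NS-assisted scheme: a 3-partite NS box where the transmitter inputs $(W_1,W_2)$ and obtains the channel input sequence as output, and Rx-$k$ inputs $\overline Y_k^{[n]}$ and obtains $\hat W_k$; the joint law is the box distribution times the channel law times $1/(|\mathcal M_1||\mathcal M_2|)$. Rate pairs are achievable if there is a sequence of schemes with vanishing $\max_k\Pr(\hat W_k\ne W_k)$ and $\lim_n\frac1n\log_2|\mathcal M_k^{(n)}|\ge R_k$; capacity region = closure; sum-capacity = max of $R_1+R_2$. *)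

theory Defs
  imports "HOL-Analysis.Analysis" "HOL-Library.Numeral_Type"
begin

text \<open>General framework: a 2-user broadcast channel with finite input alphabet 'x,
  output alphabets 'y1 (Rx-1) and 'y2 (Rx-2), given by its joint transition law
  W x (y1,y2).\<close>

definition lists_n :: "nat \<Rightarrow> 'a list set" where
  "lists_n n = {xs. length xs = n}"

definition chan_n :: "('x \<Rightarrow> 'y1 \<times> 'y2 \<Rightarrow> real) \<Rightarrow> 'x list \<Rightarrow> 'y1 list \<Rightarrow> 'y2 list \<Rightarrow> real" where
  "chan_n W xs ys1 ys2 = (\<Prod>i<length xs. W (xs ! i) (ys1 ! i, ys2 ! i))"

definition classical_scheme ::
  "nat \<Rightarrow> nat \<Rightarrow> nat \<Rightarrow> (nat \<Rightarrow> nat \<Rightarrow> 'x list \<Rightarrow> real)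
   \<Rightarrow> ('y1 list \<Rightarrow> nat \<Rightarrow> real) \<Rightarrow> ('y2 list \<Rightarrow> nat \<Rightarrow> real) \<Rightarrow> bool" where
  "classical_scheme n m1 m2 E D1 D2 \<longleftrightarrow>
     m1 \<ge> 1 \<and> m2 \<ge> 1 \<and>
     (\<forall>w1<m1. \<forall>w2<m2. (\<forall>xs\<in>lists_n n. E w1 w2 xs \<ge> 0) \<and> (\<Sum>xs\<in>lists_n n. E w1 w2 xs) = 1) \<and>
     (\<forall>ys\<in>lists_n n. (\<forall>w<m1. D1 ys w \<ge> 0) \<and> (\<Sum>w<m1. D1 ys w) = 1) \<and>
     (\<forall>ys\<in>lists_n n. (\<forall>w<m2. D2 ys w \<ge> 0) \<and> (\<Sum>w<m2. D2 ys w) = 1)"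

definition classical_err1 ::
  "('x \<Rightarrow> 'y1 \<times> 'y2 \<Rightarrow> real) \<Rightarrow> nat \<Rightarrow> nat \<Rightarrow> nat \<Rightarrow> (nat \<Rightarrow> nat \<Rightarrow> 'x list \<Rightarrow> real)
   \<Rightarrow> ('y1 list \<Rightarrow> nat \<Rightarrow> real) \<Rightarrow> real" where
  "classical_err1 W n m1 m2 E D1 = 1 -
     (\<Sum>w1<m1. \<Sum>w2<m2. \<Sum>xs\<in>lists_n n. \<Sum>ys1\<in>lists_n n. \<Sum>ys2\<in>lists_n n.
        E w1 w2 xs * chan_n W xs ys1 ys2 * D1 ys1 w1) / (real m1 * real m2)"

definition classical_err2 ::
  "('x \<Rightarrow> 'y1 \<times> 'y2 \<Rightarrow> real) \<Rightarrow> nat \<Rightarrow> nat \<Rightarrow> nat \<Rightarrow> (nat \<Rightarrow> nat \<Rightarrow> 'x list \<Rightarrow> real)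
   \<Rightarrow> ('y2 list \<Rightarrow> nat \<Rightarrow> real) \<Rightarrow> real" where
  "classical_err2 W n m1 m2 E D2 = 1 -
     (\<Sum>w1<m1. \<Sum>w2<m2. \<Sum>xs\<in>lists_n n. \<Sum>ys1\<in>lists_n n. \<Sum>ys2\<in>lists_n n.
        E w1 w2 xs * chan_n W xs ys1 ys2 * D2 ys2 w2) / (real m1 * real m2)"

text \<open>A 3-partite NS box P w ys1 ys2 xs a b = Pr(Tx outputs xs, Rx-1 outputs a, Rx-2 outputs b
  | Tx input w = (w1,w2), Rx-1 input ys1, Rx-2 input ys2). Non-signaling condition is
  imposed for every nonempty proper subset of the three parties.\<close>
definition ns_box ::
  "nat \<Rightarrow> nat \<Rightarrow> nat \<Rightarrow> (nat \<times> nat \<Rightarrow> 'y1 list \<Rightarrow> 'y2 list \<Rightarrow> 'x list \<Rightarrow> nat \<Rightarrow> nat \<Rightarrow> real) \<Rightarrow> bool" where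
  "ns_box n m1 m2 P \<longleftrightarrow>
     m1 \<ge> 1 \<and> m2 \<ge> 1 \<and>
     (\<forall>w\<in>{..<m1} \<times> {..<m2}. \<forall>y1\<in>lists_n n. \<forall>y2\<in>lists_n n.
        (\<forall>x\<in>lists_n n. \<forall>a<m1. \<forall>b<m2. P w y1 y2 x a b \<ge> 0) \<and>
        (\<Sum>x\<in>lists_n n. \<Sum>a<m1. \<Sum>b<m2. P w y1 y2 x a b) = 1) \<and>
     (\<forall>w\<in>{..<m1} \<times> {..<m2}. \<forall>w'\<in>{..<m1} \<times> {..<m2}.
      \<forall>y1\<in>lists_n n. \<forall>y1'\<in>lists_n n. \<forall>y2\<in>lists_n n. \<forall>y2'\<in>lists_n n.
        (\<forall>x\<in>lists_n n. \<forall>a<m1.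
            (\<Sum>b<m2. P w y1 y2 x a b) = (\<Sum>b<m2. P w y1 y2' x a b)) \<and>
        (\<forall>x\<in>lists_n n. \<forall>b<m2.
            (\<Sum>a<m1. P w y1 y2 x a b) = (\<Sum>a<m1. P w y1' y2 x a b)) \<and>
        (\<forall>a<m1. \<forall>b<m2.
            (\<Sum>x\<in>lists_n n. P w y1 y2 x a b) = (\<Sum>x\<in>lists_n n. P w' y1 y2 x a b)) \<and>
        (\<forall>x\<in>lists_n n.
            (\<Sum>a<m1. \<Sum>b<m2. P w y1 y2 x a b) = (\<Sum>a<m1. \<Sum>b<m2. P w y1' y2' x a b)) \<and>
        (\<forall>a<m1.
            (\<Sum>x\<in>lists_n n. \<Sum>b<m2. P w y1 y2 x a b) = (\<Sum>x\<in>lists_n n. \<Sum>b<m2. P w' y1 y2' x a b)) \<and>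
        (\<forall>b<m2.
            (\<Sum>x\<in>lists_n n. \<Sum>a<m1. P w y1 y2 x a b) = (\<Sum>x\<in>lists_n n. \<Sum>a<m1. P w' y1' y2 x a b)))"

definition ns_err1 ::
  "('x \<Rightarrow> 'y1 \<times> 'y2 \<Rightarrow> real) \<Rightarrow> nat \<Rightarrow> nat \<Rightarrow> nat
   \<Rightarrow> (nat \<times> nat \<Rightarrow> 'y1 list \<Rightarrow> 'y2 list \<Rightarrow> 'x list \<Rightarrow> nat \<Rightarrow> nat \<Rightarrow> real) \<Rightarrow> real" where
  "ns_err1 W n m1 m2 P = 1 -
     (\<Sum>w1<m1. \<Sum>w2<m2. \<Sum>xs\<in>lists_n n. \<Sum>ys1\<in>lists_n n. \<Sum>ys2\<in>lists_n n. \<Sum>b<m2.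
        P (w1, w2) ys1 ys2 xs w1 b * chan_n W xs ys1 ys2) / (real m1 * real m2)"

definition ns_err2 ::
  "('x \<Rightarrow> 'y1 \<times> 'y2 \<Rightarrow> real) \<Rightarrow> nat \<Rightarrow> nat \<Rightarrow> nat
   \<Rightarrow> (nat \<times> nat \<Rightarrow> 'y1 list \<Rightarrow> 'y2 list \<Rightarrow> 'x list \<Rightarrow> nat \<Rightarrow> nat \<Rightarrow> real) \<Rightarrow> real" where
  "ns_err2 W n m1 m2 P = 1 -
     (\<Sum>w1<m1. \<Sum>w2<m2. \<Sum>xs\<in>lists_n n. \<Sum>ys1\<in>lists_n n. \<Sum>ys2\<in>lists_n n. \<Sum>a<m1.
        P (w1, w2) ys1 ys2 xs a w2 * chan_n W xs ys1 ys2) / (real m1 * real m2)"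

definition rate_ge :: "(nat \<Rightarrow> nat) \<Rightarrow> real \<Rightarrow> bool" where
  "rate_ge m R \<longleftrightarrow> (\<forall>\<epsilon>>0. eventually (\<lambda>n. log 2 (real (m n)) / real n \<ge> R - \<epsilon>) sequentially)"

definition achievable_classical :: "('x \<Rightarrow> 'y1 \<times> 'y2 \<Rightarrow> real) \<Rightarrow> real \<times> real \<Rightarrow> bool" where
  "achievable_classical W R \<longleftrightarrow>
     fst R \<ge> 0 \<and> snd R \<ge> 0 \<and>
     (\<exists>(m1 :: nat \<Rightarrow> nat) (m2 :: nat \<Rightarrow> nat) E D1 D2.
        (\<forall>n. classical_scheme n (m1 n) (m2 n) (E n) (D1 n) (D2 n)) \<and>
        (\<lambda>n. max (classical_err1 W n (m1 n) (m2 n) (E n) (D1 n))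
                  (classical_err2 W n (m1 n) (m2 n) (E n) (D2 n))) \<longlonglongrightarrow> 0 \<and>
        rate_ge m1 (fst R) \<and> rate_ge m2 (snd R))"

definition achievable_ns :: "('x \<Rightarrow> 'y1 \<times> 'y2 \<Rightarrow> real) \<Rightarrow> real \<times> real \<Rightarrow> bool" where
  "achievable_ns W R \<longleftrightarrow>
     fst R \<ge> 0 \<and> snd R \<ge> 0 \<and>
     (\<exists>(m1 :: nat \<Rightarrow> nat) (m2 :: nat \<Rightarrow> nat)
        (P :: nat \<Rightarrow> nat \<times> nat \<Rightarrow> 'y1 list \<Rightarrow> 'y2 list \<Rightarrow> 'x list \<Rightarrow> nat \<Rightarrow> nat \<Rightarrow> real).
        (\<forall>n. ns_box n (m1 n) (m2 n) (P n)) \<and>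
        (\<lambda>n. max (ns_err1 W n (m1 n) (m2 n) (P n)) (ns_err2 W n (m1 n) (m2 n) (P n))) \<longlonglongrightarrow> 0 \<and>
        rate_ge m1 (fst R) \<and> rate_ge m2 (snd R))"

definition capacity_region :: "('x \<Rightarrow> 'y1 \<times> 'y2 \<Rightarrow> real) \<Rightarrow> (real \<times> real) set" where
  "capacity_region W = closure {R. achievable_classical W R}"

definition capacity_region_ns :: "('x \<Rightarrow> 'y1 \<times> 'y2 \<Rightarrow> real) \<Rightarrow> (real \<times> real) set" where
  "capacity_region_ns W = closure {R. achievable_ns W R}"

definition is_sum_capacity :: "(real \<times> real) set \<Rightarrow> real \<Rightarrow> bool" where
  "is_sum_capacity S c \<longleftrightarrow> (\<exists>R\<in>S. fst R + snd R = c) \<and> (\<forall>R\<in>S. fst R + snd R \<le> c)"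

definition semi_deterministic :: "('x \<Rightarrow> 'y1 \<times> 'y2 \<Rightarrow> real) \<Rightarrow> bool" where
  "semi_deterministic W \<longleftrightarrow>
     (\<exists>f. \<forall>x y1. (\<Sum>y2\<in>UNIV. W x (y1, y2)) = (if y1 = f x then 1 else 0)) \<or>
     (\<exists>f. \<forall>x y2. (\<Sum>y1\<in>UNIV. W x (y1, y2)) = (if y2 = f x then 1 else 0))"

text \<open>The specific channel over F_3 (type 3 of HOL-Library.Numeral_Type, arithmetic mod 3):
  input (x1,x2); G uniform on {1,-1}; Rx-1 sees x1; Rx-2 sees (G x1 + x2, G).\<close>
definition bc3 :: "3 \<times> 3 \<Rightarrow> 3 \<times> (3 \<times> 3) \<Rightarrow> real" where
  "bc3 x y = (\<Sum>g\<in>{1, -1 :: 3}. (1/2) *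
       (if fst y = fst x \<and> snd y = (g * fst x + snd x, g) then 1 else 0))"

end

theory Submission
  imports Defs
begin


definition lsets :: "'a set \<Rightarrow> nat \<Rightarrow> 'a list set" where
  "lsets A n = {l. set l \<subseteq> A \<and> length l = n}"

lemma lists_n_lsets: "lists_n n = lsets UNIV n"
  by (simp add: lists_n_def lsets_def)

lemma finite_lsets[simp]: "finite A \<Longrightarrow> finite (lsets A n)"
  unfolding lsets_def by (rule finite_lists_length_eq)

lemma card_lsets: "finite A \<Longrightarrow> card (lsets A n) = card A ^ n"
  unfolding lsets_def by (rule card_lists_length_eq)

lemma finite_lists_n[simp]: "finite (lists_n n :: ('a::finite) list set)"
  by (simp add: lists_n_lsets)

lemma card_lists_n: "card (lists_n n :: ('a::finite) list set) = CARD('a) ^ n"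
  by (simp add: lists_n_lsets card_lsets)

lemma lsets_Suc: "lsets A (Suc n) = (\<lambda>(a,l). a # l) ` (A \<times> lsets A n)"
  unfolding lsets_def
  by (auto simp: length_Suc_conv image_iff)

lemma sum_lsets_Suc:
  assumes "finite A"
  shows "(\<Sum>l\<in>lsets A (Suc n). f l) = (\<Sum>a\<in>A. \<Sum>l\<in>lsets A n. f (a # l))"
proof -
  have "inj_on (\<lambda>(a,l). a # l) (A \<times> lsets A n)" by (auto simp: inj_on_def)
  then have "(\<Sum>l\<in>lsets A (Suc n). f l) = (\<Sum>p\<in>A \<times> lsets A n. (f \<circ> (\<lambda>(a,l). a # l)) p)"
    unfolding lsets_Suc by (rule sum.reindex)
  also have "\<dots> = (\<Sum>(a,l)\<in>A \<times> lsets A n. f (a # l))"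
    by (simp add: case_prod_beta comp_def)
  also have "\<dots> = (\<Sum>a\<in>A. \<Sum>l\<in>lsets A n. f (a # l))"
    using assms by (simp add: sum.cartesian_product[symmetric])
  finally show ?thesis .
qed

lemma sum_lists_n_Suc:
  "(\<Sum>l\<in>lists_n (Suc n). f l) = (\<Sum>a\<in>(UNIV::('a::finite) set). \<Sum>l\<in>lists_n n. f (a # l))"
  by (simp add: lists_n_lsets sum_lsets_Suc)

lemma lsets_0[simp]: "lsets A 0 = {[]}"
  by (auto simp: lsets_def)

lemma lists_n_0[simp]: "lists_n 0 = {[]}"
  by (auto simp: lists_n_def)

lemma lists_n_iff[simp]: "xs \<in> lists_n n \<longleftrightarrow> length xs = n"
  by (simp add: lists_n_def)

lemma lsets_iff: "xs \<in> lsets A n \<longleftrightarrow> set xs \<subseteq> A \<and> length xs = n"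
  by (simp add: lsets_def)

abbreviation gs :: "nat \<Rightarrow> 3 list set" where
  "gs n \<equiv> lsets {1, -1} n"

lemma card_gs: "card (gs n) = 2 ^ n"
proof -
  have c2: "card {1, -1::3} = 2" by simp
  show ?thesis by (simp only: card_lsets finite.insertI finite.emptyI c2)
qed

definition out2 :: "(3 \<times> 3) list \<Rightarrow> 3 list \<Rightarrow> (3 \<times> 3) list" where
  "out2 x g = map (\<lambda>(xi, gi). (gi * fst xi + snd xi, gi)) (zip x g)"

lemma out2_Cons[simp]: "out2 (x0 # xs) (a # g) = (a * fst x0 + snd x0, a) # out2 xs g"
  by (simp add: out2_def)

lemma length_out2[simp]: "length (out2 x g) = min (length x) (length g)"
  by (simp add: out2_def)

lemma chan_n_Cons[simp]:
  "chan_n W (x0 # xs) (y1 # ys1) (y2 # ys2) = W x0 (y1, y2) * chan_n W xs ys1 ys2"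
  unfolding chan_n_def by (simp only: length_Cons prod.lessThan_Suc_shift) simp

lemma chan_n_Nil[simp]: "chan_n W [] ys1 ys2 = 1"
  by (simp add: chan_n_def)

lemma one_ne_m1: "(1::3) \<noteq> -1" by simp


lemma delta2: "(\<Sum>y1\<in>(UNIV::'a::finite set). \<Sum>y2\<in>(UNIV::'b::finite set). (if y1 = a \<and> y2 = b then c else 0) * F y1 y2) = c * (F a b :: real)"
proof -
  have "\<And>y1. (\<Sum>y2\<in>(UNIV::'b set). (if y1 = a \<and> y2 = b then c else 0) * F y1 y2) = (if y1 = a then c * F a b else 0)"
    by (case_tac "y1 = a") (simp_all add: if_distrib[of "\<lambda>t. t * F _ _"] cong: if_cong)
  then show ?thesis by simp
qed

lemma bc3_eq: "bc3 x0 (y1,y2) = (if y1 = fst x0 \<and> y2 = (1 * fst x0 + snd x0, 1) then 1/2 else 0)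
   + (if y1 = fst x0 \<and> y2 = ((-1)*fst x0 + snd x0, -1) then 1/2 else 0)"
  unfolding bc3_def using one_ne_m1 by (simp del: mult_1 mult_minus_left)

lemma bc3_sum:
  "(\<Sum>y1\<in>UNIV. \<Sum>y2\<in>UNIV. bc3 x0 (y1, y2) * F y1 y2) =
   (F (fst x0) (1 * fst x0 + snd x0, 1) + F (fst x0) ((-1) * fst x0 + snd x0, -1)) / 2"
  unfolding bc3_eq by (simp only: distrib_right sum.distrib delta2) simp

lemma CH:
  "length x = n \<Longrightarrow> (\<Sum>ys1\<in>lists_n n. \<Sum>ys2\<in>lists_n n. chan_n bc3 x ys1 ys2 * f ys1 ys2)
     = (\<Sum>g\<in>gs n. f (map fst x) (out2 x g)) / 2^n"
proof (induction n arbitrary: x f)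
  case 0
  then show ?case by (simp add: out2_def)
next
  case (Suc n)
  then obtain x0 xs where x: "x = x0 # xs" and lxs: "length xs = n"
    by (cases x) auto
  have "(\<Sum>ys1\<in>lists_n (Suc n). \<Sum>ys2\<in>lists_n (Suc n). chan_n bc3 x ys1 ys2 * f ys1 ys2)
      = (\<Sum>y1\<in>UNIV. \<Sum>ys1\<in>lists_n n. \<Sum>y2\<in>UNIV. \<Sum>ys2\<in>lists_n n.
           bc3 x0 (y1, y2) * (chan_n bc3 xs ys1 ys2 * f (y1 # ys1) (y2 # ys2)))"
    by (simp add: sum_lists_n_Suc x mult.assoc)
  also have "\<dots> = (\<Sum>y1\<in>UNIV. \<Sum>y2\<in>UNIV. bc3 x0 (y1, y2) *
        (\<Sum>ys1\<in>lists_n n. \<Sum>ys2\<in>lists_n n. chan_n bc3 xs ys1 ys2 * f (y1 # ys1) (y2 # ys2)))"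
    by (simp add: sum_distrib_left sum.swap[of _ "lists_n n" UNIV])
  also have "\<dots> = (\<Sum>y1\<in>UNIV. \<Sum>y2\<in>UNIV. bc3 x0 (y1, y2) *
        ((\<Sum>g\<in>gs n. f (y1 # map fst xs) (y2 # out2 xs g)) / 2^n))"
    using Suc.IH[OF lxs] by simp
  also have "\<dots> = ((\<Sum>g\<in>gs n. f (fst x0 # map fst xs) ((1 * fst x0 + snd x0, 1) # out2 xs g)) / 2^n
      + (\<Sum>g\<in>gs n. f (fst x0 # map fst xs) (((-1) * fst x0 + snd x0, -1) # out2 xs g)) / 2^n) / 2"
    by (rule bc3_sum)
  also have "\<dots> = (\<Sum>g\<in>gs (Suc n). f (map fst x) (out2 x g)) / 2^(Suc n)"
    using one_ne_m1 by (simp add: sum_lsets_Suc x add_divide_distrib del: mult_1 mult_minus_left)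
  finally show ?case .
qed


lemma incl_excl:
  fixes Q :: "nat \<Rightarrow> nat \<Rightarrow> real"
  assumes nn: "\<And>a b. a < m1 \<Longrightarrow> b < m2 \<Longrightarrow> Q a b \<ge> 0" and a: "w1 < m1" and b: "w2 < m2"
  shows "(\<Sum>b<m2. Q w1 b) + (\<Sum>a<m1. Q a w2) \<le> Q w1 w2 + (\<Sum>a<m1. \<Sum>b<m2. Q a b)"
proof -
  have e1: "(\<Sum>a<m1. Q a w2) = Q w1 w2 + (\<Sum>a\<in>{..<m1}-{w1}. Q a w2)"
    using a by (simp add: sum.remove)
  have e2: "(\<Sum>a<m1. \<Sum>b<m2. Q a b) = (\<Sum>b<m2. Q w1 b) + (\<Sum>a\<in>{..<m1}-{w1}. \<Sum>b<m2. Q a b)"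
    using a by (simp add: sum.remove)
  have "(\<Sum>a\<in>{..<m1}-{w1}. Q a w2) \<le> (\<Sum>a\<in>{..<m1}-{w1}. \<Sum>b<m2. Q a b)"
  proof (rule sum_mono)
    fix a assume "a \<in> {..<m1}-{w1}"
    then show "Q a w2 \<le> (\<Sum>b<m2. Q a b)"
      using b nn by (intro member_le_sum) auto
  qed
  then show ?thesis using e1 e2 by linarith
qed

lemma swap3: "(\<Sum>a\<in>A. \<Sum>b\<in>B. \<Sum>c\<in>C. f a b c) = (\<Sum>c\<in>C. \<Sum>a\<in>A. \<Sum>b\<in>B. f a b c)"
proof -
  have "(\<Sum>a\<in>A. \<Sum>b\<in>B. \<Sum>c\<in>C. f a b c) = (\<Sum>a\<in>A. \<Sum>c\<in>C. \<Sum>b\<in>B. f a b c)"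
    by (rule sum.cong[OF refl], rule sum.swap)
  also have "\<dots> = (\<Sum>c\<in>C. \<Sum>a\<in>A. \<Sum>b\<in>B. f a b c)" by (rule sum.swap)
  finally show ?thesis .
qed

lemma swap4: "(\<Sum>a\<in>A. \<Sum>b\<in>B. \<Sum>c\<in>C. \<Sum>d\<in>D. f a b c d) = (\<Sum>c\<in>C. \<Sum>d\<in>D. \<Sum>a\<in>A. \<Sum>b\<in>B. f a b c d)"
proof -
  have "(\<Sum>a\<in>A. \<Sum>b\<in>B. \<Sum>c\<in>C. \<Sum>d\<in>D. f a b c d) = (\<Sum>c\<in>C. \<Sum>a\<in>A. \<Sum>b\<in>B. \<Sum>d\<in>D. f a b c d)"
    by (rule swap3)
  also have "\<dots> = (\<Sum>c\<in>C. \<Sum>d\<in>D. \<Sum>a\<in>A. \<Sum>b\<in>B. f a b c d)"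
    by (rule sum.cong[OF refl], rule swap3)
  finally show ?thesis .
qed

lemma card_lists_pairs: "card (lists_n n :: (3\<times>3) list set) = 9^n"
  by (simp add: card_lists_n)

lemma ns_bound:
  assumes box: "ns_box n m1 m2 P"
  shows "real (m1*m2) * (1 - ns_err1 bc3 n m1 m2 P - ns_err2 bc3 n m1 m2 P) \<le> 9^n"
proof -
  let ?L = "lists_n n"
  define M where "M = real (m1 * m2)"
  have m1: "m1 \<ge> 1" and m2: "m2 \<ge> 1" using box by (auto simp: ns_box_def)
  have Mpos: "M > 0" using m1 m2 by (simp add: M_def)
  have nn: "\<And>w y1 y2 x a b. w \<in> {..<m1}\<times>{..<m2} \<Longrightarrow> y1 \<in> ?L \<Longrightarrow> y2 \<in> ?L \<Longrightarrow> x \<in> ?L \<Longrightarrow> a < m1 \<Longrightarrow> b < m2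
      \<Longrightarrow> P w y1 y2 x a b \<ge> 0"
    using box unfolding ns_box_def by blast
  have norm: "\<And>w y1 y2. w \<in> {..<m1}\<times>{..<m2} \<Longrightarrow> y1 \<in> ?L \<Longrightarrow> y2 \<in> ?L \<Longrightarrow>
      (\<Sum>x\<in>?L. \<Sum>a<m1. \<Sum>b<m2. P w y1 y2 x a b) = 1"
    using box unfolding ns_box_def by blast
  have c3: "\<And>w w' y1 y2 a b. w \<in> {..<m1}\<times>{..<m2} \<Longrightarrow> w' \<in> {..<m1}\<times>{..<m2} \<Longrightarrow> y1 \<in> ?L \<Longrightarrow> y2 \<in> ?L
     \<Longrightarrow> a < m1 \<Longrightarrow> b < m2 \<Longrightarrow> (\<Sum>x\<in>?L. P w y1 y2 x a b) = (\<Sum>x\<in>?L. P w' y1 y2 x a b)"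
    using box unfolding ns_box_def by blast
  have c4: "\<And>w y1 y2 y1' y2' x. w \<in> {..<m1}\<times>{..<m2} \<Longrightarrow> y1 \<in> ?L \<Longrightarrow> y2 \<in> ?L
     \<Longrightarrow> y1' \<in> ?L \<Longrightarrow> y2' \<in> ?L \<Longrightarrow> x \<in> ?L \<Longrightarrow>
     (\<Sum>a<m1. \<Sum>b<m2. P w y1 y2 x a b) = (\<Sum>a<m1. \<Sum>b<m2. P w y1' y2' x a b)"
    using box unfolding ns_box_def by blast
  define Y1 :: "(3\<times>3) list \<Rightarrow> 3 list" where "Y1 x = map fst x" for x
  define A1 where "A1 w1 w2 x g = (\<Sum>b<m2. P (w1,w2) (Y1 x) (out2 x g) x w1 b)" for w1 w2 x g
  define A2 where "A2 w1 w2 x g = (\<Sum>a<m1. P (w1,w2) (Y1 x) (out2 x g) x a w2)" for w1 w2 x g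
  define J where "J w1 w2 x g = P (w1,w2) (Y1 x) (out2 x g) x w1 w2" for w1 w2 x g
  define T where "T w1 w2 x g = (\<Sum>a<m1. \<Sum>b<m2. P (w1,w2) (Y1 x) (out2 x g) x a b)" for w1 w2 x g
  have Y1L: "x \<in> ?L \<Longrightarrow> Y1 x \<in> ?L" for x by (simp add: Y1_def)
  have o2L: "x \<in> ?L \<Longrightarrow> g \<in> gs n \<Longrightarrow> out2 x g \<in> ?L" for x g by (simp add: lsets_iff)
  have S1: "(\<Sum>w1<m1. \<Sum>w2<m2. \<Sum>xs\<in>?L. \<Sum>ys1\<in>?L. \<Sum>ys2\<in>?L. \<Sum>b<m2.
        P (w1, w2) ys1 ys2 xs w1 b * chan_n bc3 xs ys1 ys2)
      = (\<Sum>w1<m1. \<Sum>w2<m2. \<Sum>xs\<in>?L. (\<Sum>g\<in>gs n. A1 w1 w2 xs g) / 2^n)"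
  proof (intro sum.cong refl)
    fix w1 w2 and xs :: "(3\<times>3) list" assume "xs \<in> ?L"
    then have "length xs = n" by simp
    from CH[OF this, of "\<lambda>ys1 ys2. \<Sum>b<m2. P (w1, w2) ys1 ys2 xs w1 b"]
    show "(\<Sum>ys1\<in>?L. \<Sum>ys2\<in>?L. \<Sum>b<m2. P (w1, w2) ys1 ys2 xs w1 b * chan_n bc3 xs ys1 ys2)
        = (\<Sum>g\<in>gs n. A1 w1 w2 xs g) / 2^n"
      by (simp add: A1_def Y1_def sum_distrib_left sum_distrib_right mult.commute)
  qed
  have S2: "(\<Sum>w1<m1. \<Sum>w2<m2. \<Sum>xs\<in>?L. \<Sum>ys1\<in>?L. \<Sum>ys2\<in>?L. \<Sum>a<m1.
        P (w1, w2) ys1 ys2 xs a w2 * chan_n bc3 xs ys1 ys2)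
      = (\<Sum>w1<m1. \<Sum>w2<m2. \<Sum>xs\<in>?L. (\<Sum>g\<in>gs n. A2 w1 w2 xs g) / 2^n)"
  proof (intro sum.cong refl)
    fix w1 w2 and xs :: "(3\<times>3) list" assume "xs \<in> ?L"
    then have "length xs = n" by simp
    from CH[OF this, of "\<lambda>ys1 ys2. \<Sum>a<m1. P (w1, w2) ys1 ys2 xs a w2"]
    show "(\<Sum>ys1\<in>?L. \<Sum>ys2\<in>?L. \<Sum>a<m1. P (w1, w2) ys1 ys2 xs a w2 * chan_n bc3 xs ys1 ys2)
        = (\<Sum>g\<in>gs n. A2 w1 w2 xs g) / 2^n"
      by (simp add: A2_def Y1_def sum_distrib_left sum_distrib_right mult.commute)
  qed
  have pw: "A1 w1 w2 x g + A2 w1 w2 x g \<le> J w1 w2 x g + T w1 w2 x g"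
    if "w1 < m1" "w2 < m2" "x \<in> ?L" "g \<in> gs n" for w1 w2 x g
    unfolding A1_def A2_def J_def T_def
    by (rule incl_excl[OF _ that(1,2)]) (use that nn Y1L o2L in auto)
  have Tsum: "(\<Sum>x\<in>?L. (\<Sum>g\<in>gs n. T w1 w2 x g) / 2^n) = 1" if "w1 < m1" "w2 < m2" for w1 w2
  proof -
    define y0 :: "3 list" where "y0 = replicate n 0"
    define y0' :: "(3\<times>3) list" where "y0' = replicate n (0,0)"
    have "(\<Sum>g\<in>gs n. T w1 w2 x g) = (\<Sum>g\<in>gs n. \<Sum>a<m1. \<Sum>b<m2. P (w1,w2) y0 y0' x a b)"
      if "x \<in> ?L" for x
      unfolding T_def
      by (intro sum.cong refl c4) (use that \<open>w1 < m1\<close> \<open>w2 < m2\<close> Y1L o2L in \<open>auto simp: y0_def y0'_def\<close>)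
    then have "(\<Sum>x\<in>?L. (\<Sum>g\<in>gs n. T w1 w2 x g) / 2^n) = (\<Sum>x\<in>?L. \<Sum>a<m1. \<Sum>b<m2. P (w1,w2) y0 y0' x a b)"
      by (simp add: card_gs)
    also have "\<dots> = 1" by (rule norm) (use that in \<open>auto simp: y0_def y0'_def\<close>)
    finally show ?thesis .
  qed
  have Jsum: "(\<Sum>w1<m1. \<Sum>w2<m2. J w1 w2 x g) \<le> 1" if "x \<in> ?L" "g \<in> gs n" for x g
  proof -
    have "(\<Sum>w1<m1. \<Sum>w2<m2. J w1 w2 x g) \<le> (\<Sum>w1<m1. \<Sum>w2<m2. \<Sum>x'\<in>?L. P (w1,w2) (Y1 x) (out2 x g) x' w1 w2)"
      unfolding J_def
      by (intro sum_mono member_le_sum) (use that nn Y1L o2L in auto)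
    also have "\<dots> = (\<Sum>w1<m1. \<Sum>w2<m2. \<Sum>x'\<in>?L. P (0,0) (Y1 x) (out2 x g) x' w1 w2)"
      by (intro sum.cong refl c3) (use that m1 m2 Y1L o2L in auto)
    also have "\<dots> = (\<Sum>x'\<in>?L. \<Sum>w1<m1. \<Sum>w2<m2. P (0,0) (Y1 x) (out2 x g) x' w1 w2)"
      by (rule swap3)
    also have "\<dots> = 1" by (rule norm) (use that m1 m2 Y1L o2L in auto)
    finally show ?thesis .
  qed
  have "(\<Sum>w1<m1. \<Sum>w2<m2. \<Sum>x\<in>?L. (\<Sum>g\<in>gs n. A1 w1 w2 x g) / 2^n)
      + (\<Sum>w1<m1. \<Sum>w2<m2. \<Sum>x\<in>?L. (\<Sum>g\<in>gs n. A2 w1 w2 x g) / 2^n)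
      = (\<Sum>w1<m1. \<Sum>w2<m2. \<Sum>x\<in>?L. (\<Sum>g\<in>gs n. A1 w1 w2 x g + A2 w1 w2 x g) / 2^n)"
    by (simp add: sum.distrib add_divide_distrib)
  also have "\<dots> \<le> (\<Sum>w1<m1. \<Sum>w2<m2. \<Sum>x\<in>?L. (\<Sum>g\<in>gs n. J w1 w2 x g + T w1 w2 x g) / 2^n)"
    by (intro sum_mono divide_right_mono pw) auto
  also have "\<dots> = (\<Sum>w1<m1. \<Sum>w2<m2. \<Sum>x\<in>?L. (\<Sum>g\<in>gs n. J w1 w2 x g) / 2^n)
      + (\<Sum>w1<m1. \<Sum>w2<m2. \<Sum>x\<in>?L. (\<Sum>g\<in>gs n. T w1 w2 x g) / 2^n)"
    by (simp add: sum.distrib add_divide_distrib)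
  also have "(\<Sum>w1<m1. \<Sum>w2<m2. \<Sum>x\<in>?L. (\<Sum>g\<in>gs n. T w1 w2 x g) / 2^n) = M"
    by (simp add: Tsum M_def)
  also have "(\<Sum>w1<m1. \<Sum>w2<m2. \<Sum>x\<in>?L. (\<Sum>g\<in>gs n. J w1 w2 x g) / 2^n)
      = (\<Sum>x\<in>?L. \<Sum>g\<in>gs n. (\<Sum>w1<m1. \<Sum>w2<m2. J w1 w2 x g)) / 2^n"
    using swap4[where f="\<lambda>w1 w2 x g. J w1 w2 x g" and A="{..<m1}" and B="{..<m2}" and C="lists_n n" and D="gs n"]
    by (simp add: sum_divide_distrib[symmetric])
  also have "\<dots> \<le> (\<Sum>x\<in>(lists_n n :: (3\<times>3) list set). \<Sum>g\<in>gs n. (1::real)) / 2^n"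
  proof (rule divide_right_mono)
    show "(\<Sum>x\<in>?L. \<Sum>g\<in>gs n. (\<Sum>w1<m1. \<Sum>w2<m2. J w1 w2 x g)) \<le> (\<Sum>x\<in>(lists_n n :: (3\<times>3) list set). \<Sum>g\<in>gs n. (1::real))"
    proof (rule sum_mono)+
      fix x :: "(3\<times>3) list" and g assume "x \<in> ?L" "g \<in> gs n"
      then show "(\<Sum>w1<m1. \<Sum>w2<m2. J w1 w2 x g) \<le> 1" by (rule Jsum)
    qed
  qed simp
  also have "\<dots> = 9^n"
    by (simp add: card_gs card_lists_pairs)
  finally have main: "(\<Sum>w1<m1. \<Sum>w2<m2. \<Sum>x\<in>?L. (\<Sum>g\<in>gs n. A1 w1 w2 x g) / 2^n)
      + (\<Sum>w1<m1. \<Sum>w2<m2. \<Sum>x\<in>?L. (\<Sum>g\<in>gs n. A2 w1 w2 x g) / 2^n) \<le> 9^n + M" by simp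
  have MM: "real m1 * real m2 = M" by (simp add: M_def)
  show ?thesis
    unfolding ns_err1_def ns_err2_def S1 S2 M_def[symmetric] MM
  proof -
    have gen: "M * (1 - (1 - a/M) - (1 - b/M)) \<le> 9^n" if "a + b \<le> 9^n + M" for a b
    proof -
      have "M * (1 - (1 - a/M) - (1 - b/M)) = M*(a/M) + M*(b/M) - M" by (simp add: algebra_simps)
      also have "\<dots> = a + b - M" using Mpos by simp
      finally show ?thesis using that by simp
    qed
    show "M * (1 - (1 - (\<Sum>w1<m1. \<Sum>w2<m2. \<Sum>xs\<in>?L. (\<Sum>g\<in>gs n. A1 w1 w2 xs g) / 2^n) / M)
        - (1 - (\<Sum>w1<m1. \<Sum>w2<m2. \<Sum>xs\<in>?L. (\<Sum>g\<in>gs n. A2 w1 w2 xs g) / 2^n) / M)) \<le> 9^n"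
      by (rule gen[OF main])
  qed
qed


lemma conv_asym:
  fixes m1 m2 :: "nat \<Rightarrow> nat" and e1 e2 :: "nat \<Rightarrow> real"
  assumes pos1: "\<And>n. m1 n \<ge> 1" and pos2: "\<And>n. m2 n \<ge> 1"
    and lim: "(\<lambda>n. max (e1 n) (e2 n)) \<longlonglongrightarrow> 0"
    and ineq: "\<And>n. real (m1 n * m2 n) * (1 - K * (e1 n + e2 n)) \<le> B^n"
    and K: "K > 0" and B: "B > 0"
    and r1: "rate_ge m1 R1" and r2: "rate_ge m2 R2"
  shows "R1 + R2 \<le> log 2 B"
proof (rule ccontr)
  assume "\<not> R1 + R2 \<le> log 2 B"
  define \<epsilon> where "\<epsilon> = (R1 + R2 - log 2 B) / 4"
  have ep: "\<epsilon> > 0" using \<open>\<not> R1 + R2 \<le> log 2 B\<close> by (simp add: \<epsilon>_def)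
  have ev1: "eventually (\<lambda>n. log 2 (real (m1 n)) / real n \<ge> R1 - \<epsilon>) sequentially"
    using r1 ep by (simp add: rate_ge_def)
  have ev2: "eventually (\<lambda>n. log 2 (real (m2 n)) / real n \<ge> R2 - \<epsilon>) sequentially"
    using r2 ep by (simp add: rate_ge_def)
  have "1/(4*K) > 0" using K by simp
  from lim[THEN order_tendstoD(2), OF this]
  have ev3: "eventually (\<lambda>n. max (e1 n) (e2 n) < 1/(4*K)) sequentially" .
  have ev4: "eventually (\<lambda>n. 1 / real n < \<epsilon> \<and> n > 0) sequentially"
  proof -
    obtain N :: nat where N: "N > 1/\<epsilon>" using reals_Archimedean2 by blast
    have "1 / real n < \<epsilon> \<and> n > 0" if "n \<ge> N + 1" for n
    proof -
      have "real n > 1/\<epsilon>" using N that by linarith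
      then have "real n * \<epsilon> > 1" using ep by (simp add: field_simps)
      then show ?thesis using ep that by (simp add: field_simps)
    qed
    then show ?thesis unfolding eventually_sequentially by blast
  qed
  from eventually_conj[OF ev1 eventually_conj[OF ev2 eventually_conj[OF ev3 ev4]]]
  obtain n where n1: "log 2 (real (m1 n)) / real n \<ge> R1 - \<epsilon>"
    and n2: "log 2 (real (m2 n)) / real n \<ge> R2 - \<epsilon>"
    and n3: "max (e1 n) (e2 n) < 1/(4*K)" and n4: "1 / real n < \<epsilon>" and n5: "n > 0"
    by (auto dest: eventually_happens)
  have "1/(2*K) = 2 * (1/(4*K))" by simp
  moreover have "e1 n < 1/(4*K)" "e2 n < 1/(4*K)" using n3 by auto
  ultimately have "e1 n + e2 n < 1/(2*K)" by linarith
  then have "K * (e1 n + e2 n) < 1/2" using K by (simp add: field_simps)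
  then have h: "1 - K * (e1 n + e2 n) > 1/2" by simp
  have mpos: "real (m1 n * m2 n) > 0" using pos1[of n] pos2[of n] by simp
  have "real (m1 n * m2 n) * (1/2) \<le> real (m1 n * m2 n) * (1 - K * (e1 n + e2 n))"
    using h mpos by (intro mult_left_mono) auto
  also have "\<dots> \<le> B^n" by (rule ineq)
  finally have "real (m1 n) * real (m2 n) \<le> 2 * B^n" by simp
  then have "log 2 (real (m1 n) * real (m2 n)) \<le> log 2 (2 * B^n)"
    using pos1[of n] pos2[of n] B by (subst log_le_cancel_iff) auto
  also have "\<dots> = 1 + real n * log 2 B" using B by (simp add: log_mult log_nat_power)
  finally have L: "log 2 (real (m1 n)) + log 2 (real (m2 n)) \<le> 1 + real n * log 2 B"
    using pos1[of n] pos2[of n] by (simp add: log_mult)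
  have "R1 - \<epsilon> + (R2 - \<epsilon>) \<le> (log 2 (real (m1 n)) + log 2 (real (m2 n))) / real n"
    using n1 n2 by (simp add: add_divide_distrib)
  also have "\<dots> \<le> (1 + real n * log 2 B) / real n"
    using L n5 by (simp add: divide_right_mono)
  also have "\<dots> = 1 / real n + log 2 B" using n5 by (simp add: field_simps)
  finally have "R1 + R2 - 2*\<epsilon> < \<epsilon> + log 2 B" using n4 by linarith
  moreover have "R1 + R2 = 4 * \<epsilon> + log 2 B" unfolding \<epsilon>_def by (simp add: field_simps)
  ultimately show False using ep by linarith
qed


definition encb :: "nat \<Rightarrow> nat \<Rightarrow> 3 list" where
  "encb n = (SOME h. bij_betw h {..<3^n} (lists_n n))"

lemma encb_bij: "bij_betw (encb n) {..<3^n} (lists_n n)"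
proof -
  have "\<exists>h. bij_betw h {..<(3::nat)^n} (lists_n n :: 3 list set)"
    by (rule finite_same_card_bij) (auto simp: card_lists_n)
  then show ?thesis unfolding encb_def by (rule someI_ex)
qed

definition encn :: "nat \<Rightarrow> nat \<Rightarrow> 3 list" where
  "encn n w = (if w < 3^n then encb n w else replicate n 0)"

definition decn :: "nat \<Rightarrow> 3 list \<Rightarrow> nat" where
  "decn n = inv_into {..<3^n} (encb n)"

lemma length_encn[simp]: "length (encn n w) = n"
  using encb_bij[of n] by (auto simp: encn_def bij_betw_def)

lemma decn_encn[simp]: "w < 3^n \<Longrightarrow> decn n (encn n w) = w"
  using encb_bij[of n] by (auto simp: encn_def decn_def bij_betw_def)

lemma decn_lt: "length ys = n \<Longrightarrow> decn n ys < 3^n"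
proof -
  assume "length ys = n"
  then have "ys \<in> encb n ` {..<3^n}" using encb_bij[of n] by (auto simp: bij_betw_def)
  then show ?thesis unfolding decn_def by (auto intro: inv_into_into[THEN lessThan_iff[THEN iffD1]])
qed

definition vadd :: "3 list \<Rightarrow> 3 list \<Rightarrow> 3 list" where "vadd u v = map2 (+) u v"
definition vsub :: "3 list \<Rightarrow> 3 list \<Rightarrow> 3 list" where "vsub u v = map2 (-) u v"
definition vmul :: "3 list \<Rightarrow> 3 list \<Rightarrow> 3 list" where "vmul u v = map2 (*) u v"

lemma length_vops[simp]:
  "length (vadd u v) = min (length u) (length v)"
  "length (vsub u v) = min (length u) (length v)"
  "length (vmul u v) = min (length u) (length v)"
  by (simp_all add: vadd_def vsub_def vmul_def)

lemma nth_vops[simp]: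
  "i < length u \<Longrightarrow> i < length v \<Longrightarrow> vadd u v ! i = u ! i + v ! i"
  "i < length u \<Longrightarrow> i < length v \<Longrightarrow> vsub u v ! i = u ! i - v ! i"
  "i < length u \<Longrightarrow> i < length v \<Longrightarrow> vmul u v ! i = u ! i * v ! i"
  by (simp_all add: vadd_def vsub_def vmul_def)

lemma sum_vsub_reindex:
  assumes "length c = n"
  shows "(\<Sum>t\<in>lists_n n. f (vsub c t)) = (\<Sum>s\<in>lists_n n. f s)"
proof (rule sum.reindex_bij_witness[of _ "\<lambda>s. vsub c s" "\<lambda>t. vsub c t"])
  fix t :: "3 list" assume "t \<in> lists_n n"
  then show "vsub c (vsub c t) = t" "vsub c t \<in> lists_n n"
    using assms by (auto intro!: nth_equalityI)
next
  fix t :: "3 list" assume "t \<in> lists_n n"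
  then show "vsub c (vsub c t) = t" "vsub c t \<in> lists_n n"
    using assms by (auto intro!: nth_equalityI)
qed simp

definition bdec :: "(3\<times>3) list \<Rightarrow> 3 list \<Rightarrow> 3 list \<Rightarrow> 3 list" where
  "bdec y2 u t = vsub (vsub (map fst y2) (vmul (map snd y2) u)) t"

definition xenc :: "nat \<Rightarrow> nat \<Rightarrow> nat \<Rightarrow> 3 list \<Rightarrow> (3\<times>3) list" where
  "xenc n w1 w2 t = zip (encn n w1) (vadd (encn n w2) t)"

lemma length_xenc[simp]: "length t = n \<Longrightarrow> length (xenc n w1 w2 t) = n"
  by (simp add: xenc_def)

lemma bdec_out2:
  assumes "length t = n" "length g = n"
  shows "bdec (out2 (xenc n w1 w2 t) g) (encn n w1) t = encn n w2"
  using assms by (intro nth_equalityI) (auto simp: bdec_def out2_def xenc_def)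

lemma map_fst_xenc: "length t = n \<Longrightarrow> map fst (xenc n w1 w2 t) = encn n w1"
  by (simp add: xenc_def)

definition ind :: "bool \<Rightarrow> real" where "ind b = (if b then 1 else 0)"

lemma ind_simps[simp]: "ind True = 1" "ind False = 0" "ind b \<ge> 0" "ind b \<le> 1"
  by (auto simp: ind_def)

lemma sum_ind_eq: "finite A \<Longrightarrow> a \<in> A \<Longrightarrow> (\<Sum>x\<in>A. ind (x = a) * f x) = f a"
  by (simp add: ind_def if_distrib[of "\<lambda>t. t * _"] sum.delta cong: if_cong)

lemma sum_ind_eq': "finite A \<Longrightarrow> a \<in> A \<Longrightarrow> (\<Sum>x\<in>A. ind (x = a)) = 1"
  using sum_ind_eq[of A a "\<lambda>_. 1"] by simp

definition nsP :: "nat \<Rightarrow> nat \<times> nat \<Rightarrow> 3 list \<Rightarrow> (3\<times>3) list \<Rightarrow> (3\<times>3) list \<Rightarrow> nat \<Rightarrow> nat \<Rightarrow> real" where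
  "nsP n w y1 y2 x a b = (\<Sum>t\<in>lists_n n. ind (x = xenc n (fst w) (snd w) t) * ind (a = decn n y1)
      * ind (b = decn n (bdec y2 (encn n (fst w)) t))) / 3^n"


lemma sum_ind_lt: "d < (m::nat) \<Longrightarrow> (\<Sum>b<m. ind (b = d)) = 1"
  using sum_ind_eq'[of "{..<m}" d] by simp

lemma len_bdec: "length y2 = n \<Longrightarrow> length t = n \<Longrightarrow> length (bdec y2 u t) = (if length u < n then length u else n)"
  by (simp add: bdec_def)

lemma decn_bdec_lt: "length y2 = n \<Longrightarrow> length t = n \<Longrightarrow> decn n (bdec y2 (encn n w1) t) < 3^n"
  by (rule decn_lt) (simp add: len_bdec)

lemma nsP_b: "length y2 = n \<Longrightarrow> (\<Sum>b<3^n. nsP n w y1 y2 x a b)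
   = (\<Sum>t\<in>lists_n n. ind (x = xenc n (fst w) (snd w) t) * ind (a = decn n y1)) / 3^n"
proof -
  assume y2: "length y2 = n"
  have "(\<Sum>b<3^n. nsP n w y1 y2 x a b) = (\<Sum>b<3^n. \<Sum>t\<in>lists_n n. ind (x = xenc n (fst w) (snd w) t) * ind (a = decn n y1)
      * ind (b = decn n (bdec y2 (encn n (fst w)) t))) / 3^n"
    unfolding nsP_def by (simp add: sum_divide_distrib)
  also have "\<dots> = (\<Sum>t\<in>lists_n n. \<Sum>b<3^n. ind (x = xenc n (fst w) (snd w) t) * ind (a = decn n y1)
      * ind (b = decn n (bdec y2 (encn n (fst w)) t))) / 3^n"
    by (subst sum.swap) (rule refl)
  also have "\<dots> = (\<Sum>t\<in>lists_n n. ind (x = xenc n (fst w) (snd w) t) * ind (a = decn n y1)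
      * (\<Sum>b<3^n. ind (b = decn n (bdec y2 (encn n (fst w)) t)))) / 3^n"
    by (simp add: sum_distrib_left)
  also have "\<dots> = (\<Sum>t\<in>lists_n n. ind (x = xenc n (fst w) (snd w) t) * ind (a = decn n y1)) / 3^n"
    using y2 by (simp add: sum_ind_lt decn_bdec_lt)
  finally show ?thesis .
qed

lemma nsP_a: "length y1 = n \<Longrightarrow> (\<Sum>a<3^n. nsP n w y1 y2 x a b)
   = (\<Sum>t\<in>lists_n n. ind (x = xenc n (fst w) (snd w) t) * ind (b = decn n (bdec y2 (encn n (fst w)) t))) / 3^n"
proof -
  assume y1: "length y1 = n"
  have "(\<Sum>a<3^n. nsP n w y1 y2 x a b) = (\<Sum>a<3^n. \<Sum>t\<in>lists_n n. ind (x = xenc n (fst w) (snd w) t) * ind (a = decn n y1)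
      * ind (b = decn n (bdec y2 (encn n (fst w)) t))) / 3^n"
    unfolding nsP_def by (simp add: sum_divide_distrib)
  also have "\<dots> = (\<Sum>t\<in>lists_n n. \<Sum>a<3^n. ind (x = xenc n (fst w) (snd w) t) * ind (a = decn n y1)
      * ind (b = decn n (bdec y2 (encn n (fst w)) t))) / 3^n"
    by (subst sum.swap) (rule refl)
  also have "\<dots> = (\<Sum>t\<in>lists_n n. ind (x = xenc n (fst w) (snd w) t)
      * (\<Sum>a<3^n. ind (a = decn n y1)) * ind (b = decn n (bdec y2 (encn n (fst w)) t))) / 3^n"
    by (simp add: sum_distrib_left sum_distrib_right)
  also have "\<dots> = (\<Sum>t\<in>lists_n n. ind (x = xenc n (fst w) (snd w) t) * ind (b = decn n (bdec y2 (encn n (fst w)) t))) / 3^n"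
    using y1 by (simp add: sum_ind_lt decn_lt)
  finally show ?thesis .
qed

lemma nsP_x: "length y2 = n \<Longrightarrow> (\<Sum>x\<in>lists_n n. nsP n w y1 y2 x a b)
   = ind (a = decn n y1) * (\<Sum>s\<in>lists_n n. ind (b = decn n s)) / 3^n"
proof -
  assume y2: "length y2 = n"
  have "(\<Sum>x\<in>lists_n n. nsP n w y1 y2 x a b) = (\<Sum>x\<in>lists_n n. \<Sum>t\<in>lists_n n. ind (x = xenc n (fst w) (snd w) t) * ind (a = decn n y1)
      * ind (b = decn n (bdec y2 (encn n (fst w)) t))) / 3^n"
    unfolding nsP_def by (simp add: sum_divide_distrib)
  also have "\<dots> = (\<Sum>t\<in>lists_n n. \<Sum>x\<in>lists_n n. ind (x = xenc n (fst w) (snd w) t) * ind (a = decn n y1)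
      * ind (b = decn n (bdec y2 (encn n (fst w)) t))) / 3^n"
    by (subst sum.swap) (rule refl)
  also have "\<dots> = (\<Sum>t\<in>lists_n n. (\<Sum>x\<in>lists_n n. ind (x = xenc n (fst w) (snd w) t))
      * ind (a = decn n y1) * ind (b = decn n (bdec y2 (encn n (fst w)) t))) / 3^n"
    by (simp add: sum_distrib_right)
  also have "\<dots> = ind (a = decn n y1) * (\<Sum>t\<in>lists_n n. ind (b = decn n (bdec y2 (encn n (fst w)) t))) / 3^n"
    by (simp add: sum_ind_eq' sum_distrib_left)
  also have "(\<Sum>t\<in>lists_n n. ind (b = decn n (bdec y2 (encn n (fst w)) t))) = (\<Sum>s\<in>lists_n n. ind (b = decn n s))"
    unfolding bdec_def by (rule sum_vsub_reindex[where f = "\<lambda>s. ind (b = decn n s)"]) (simp add: y2)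
  finally show ?thesis .
qed


lemma nsP_ab: "length y1 = n \<Longrightarrow> length y2 = n \<Longrightarrow> (\<Sum>a<3^n. \<Sum>b<3^n. nsP n w y1 y2 x a b)
   = (\<Sum>t\<in>lists_n n. ind (x = xenc n (fst w) (snd w) t)) / 3^n"
proof -
  assume y1: "length y1 = n" and y2: "length y2 = n"
  have "(\<Sum>a<3^n. \<Sum>b<3^n. nsP n w y1 y2 x a b) = (\<Sum>a<3^n. \<Sum>t\<in>lists_n n. ind (x = xenc n (fst w) (snd w) t) * ind (a = decn n y1)) / 3^n"
    using y2 by (simp add: nsP_b sum_divide_distrib)
  also have "\<dots> = (\<Sum>t\<in>lists_n n. \<Sum>a<3^n. ind (x = xenc n (fst w) (snd w) t) * ind (a = decn n y1)) / 3^n"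
    by (subst sum.swap) (rule refl)
  also have "\<dots> = (\<Sum>t\<in>lists_n n. ind (x = xenc n (fst w) (snd w) t) * (\<Sum>a<3^n. ind (a = decn n y1))) / 3^n"
    by (simp add: sum_distrib_left)
  also have "\<dots> = (\<Sum>t\<in>lists_n n. ind (x = xenc n (fst w) (snd w) t)) / 3^n"
    using y1 by (simp add: sum_ind_lt decn_lt)
  finally show ?thesis .
qed

lemma sum_sum_ind_decn: "(\<Sum>b<3^n. \<Sum>s\<in>lists_n n. ind (b = decn n s)) = 3^n"
proof -
  have "(\<Sum>b<3^n. \<Sum>s\<in>lists_n n. ind (b = decn n s)) = (\<Sum>s\<in>lists_n n. \<Sum>b<3^n. ind (b = decn n s))"
    by (rule sum.swap)
  also have "\<dots> = (\<Sum>s\<in>(lists_n n :: 3 list set). 1)"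
    by (intro sum.cong refl) (simp add: sum_ind_lt decn_lt)
  also have "\<dots> = 3^n" by (simp add: card_lists_n)
  finally show ?thesis .
qed

lemma nsP_xb: "length y2 = n \<Longrightarrow> (\<Sum>x\<in>lists_n n. \<Sum>b<3^n. nsP n w y1 y2 x a b) = ind (a = decn n y1)"
proof -
  assume y2: "length y2 = n"
  have "(\<Sum>x\<in>lists_n n. \<Sum>b<3^n. nsP n w y1 y2 x a b) = (\<Sum>b<3^n. \<Sum>x\<in>lists_n n. nsP n w y1 y2 x a b)"
    by (rule sum.swap)
  also have "\<dots> = (\<Sum>b<3^n. ind (a = decn n y1) * (\<Sum>s\<in>lists_n n. ind (b = decn n s)) / 3^n)"
    using y2 by (simp add: nsP_x)
  also have "\<dots> = ind (a = decn n y1) * (\<Sum>b<3^n. \<Sum>s\<in>lists_n n. ind (b = decn n s)) / 3^n"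
    by (simp add: sum_distrib_left sum_divide_distrib)
  also have "\<dots> = ind (a = decn n y1)" by (simp add: sum_sum_ind_decn)
  finally show ?thesis .
qed

lemma nsP_xa: "length y1 = n \<Longrightarrow> length y2 = n \<Longrightarrow> (\<Sum>x\<in>lists_n n. \<Sum>a<3^n. nsP n w y1 y2 x a b)
    = (\<Sum>s\<in>lists_n n. ind (b = decn n s)) / 3^n"
proof -
  assume y1: "length y1 = n" and y2: "length y2 = n"
  have "(\<Sum>x\<in>lists_n n. \<Sum>a<3^n. nsP n w y1 y2 x a b) = (\<Sum>a<3^n. \<Sum>x\<in>lists_n n. nsP n w y1 y2 x a b)"
    by (rule sum.swap)
  also have "\<dots> = (\<Sum>a<3^n. ind (a = decn n y1) * (\<Sum>s\<in>lists_n n. ind (b = decn n s)) / 3^n)"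
    using y2 by (simp add: nsP_x)
  also have "\<dots> = (\<Sum>a<3^n. ind (a = decn n y1)) * (\<Sum>s\<in>lists_n n. ind (b = decn n s)) / 3^n"
    by (simp add: sum_distrib_right sum_divide_distrib)
  also have "\<dots> = (\<Sum>s\<in>lists_n n. ind (b = decn n s)) / 3^n" using y1 by (simp add: sum_ind_lt decn_lt)
  finally show ?thesis .
qed

lemma nsP_xab: "length y1 = n \<Longrightarrow> length y2 = n \<Longrightarrow> (\<Sum>x\<in>lists_n n. \<Sum>a<3^n. \<Sum>b<3^n. nsP n w y1 y2 x a b) = 1"
proof -
  assume y1: "length y1 = n" and y2: "length y2 = n"
  have "(\<Sum>x\<in>lists_n n. \<Sum>a<3^n. \<Sum>b<3^n. nsP n w y1 y2 x a b) = (\<Sum>a<3^n. \<Sum>x\<in>lists_n n. \<Sum>b<3^n. nsP n w y1 y2 x a b)"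
    by (rule sum.swap)
  also have "\<dots> = (\<Sum>a<3^n. ind (a = decn n y1))" using y2 by (simp add: nsP_xb)
  also have "\<dots> = 1" using y1 by (simp add: sum_ind_lt decn_lt)
  finally show ?thesis .
qed

lemma nsP_nonneg: "nsP n w y1 y2 x a b \<ge> 0"
  unfolding nsP_def by (intro divide_nonneg_pos sum_nonneg mult_nonneg_nonneg) auto

lemma nsP_box: "ns_box n (3^n) (3^n) (nsP n)"
  unfolding ns_box_def
  apply (intro conjI ballI allI impI)
  subgoal by simp
  subgoal by simp
  subgoal by (rule nsP_nonneg)
  subgoal by (simp add: nsP_xab)
  subgoal by (simp add: nsP_b)
  subgoal by (simp add: nsP_a)
  subgoal by (simp add: nsP_x)
  subgoal by (simp add: nsP_ab)
  subgoal by (simp add: nsP_xb)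
  subgoal by (simp add: nsP_xa)
  done


lemma div_div_aux: "(S / x) / y = S / (y * (x::real))"
  by simp

lemma nsP_S1:
  assumes w1: "w1 < 3^n"
  shows "(\<Sum>xs\<in>lists_n n. \<Sum>ys1\<in>lists_n n. \<Sum>ys2\<in>lists_n n. \<Sum>b<3^n.
        nsP n (w1, w2) ys1 ys2 xs w1 b * chan_n bc3 xs ys1 ys2) = 1"
proof -
  have "(\<Sum>xs\<in>lists_n n. \<Sum>ys1\<in>lists_n n. \<Sum>ys2\<in>lists_n n. \<Sum>b<3^n.
        nsP n (w1, w2) ys1 ys2 xs w1 b * chan_n bc3 xs ys1 ys2)
     = (\<Sum>xs\<in>lists_n n. (\<Sum>g\<in>gs n. \<Sum>b<3^n. nsP n (w1, w2) (map fst xs) (out2 xs g) xs w1 b) / 2^n)"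
  proof (intro sum.cong refl)
    fix xs :: "(3\<times>3) list" assume "xs \<in> lists_n n"
    then have "length xs = n" by simp
    from CH[OF this, of "\<lambda>ys1 ys2. \<Sum>b<3^n. nsP n (w1, w2) ys1 ys2 xs w1 b"]
    show "(\<Sum>ys1\<in>lists_n n. \<Sum>ys2\<in>lists_n n. \<Sum>b<3^n. nsP n (w1, w2) ys1 ys2 xs w1 b * chan_n bc3 xs ys1 ys2)
        = (\<Sum>g\<in>gs n. \<Sum>b<3^n. nsP n (w1, w2) (map fst xs) (out2 xs g) xs w1 b) / 2^n"
      by (simp add: sum_distrib_left sum_distrib_right mult.commute)
  qed
  also have "\<dots> = (\<Sum>xs\<in>lists_n n. (\<Sum>g\<in>gs n. \<Sum>t\<in>lists_n n.
        ind (xs = xenc n w1 w2 t) * ind (w1 = decn n (map fst xs))) / (2^n * 3^n))"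
  proof (intro sum.cong refl)
    fix xs :: "(3\<times>3) list" assume xs: "xs \<in> lists_n n"
    have "(\<Sum>g\<in>gs n. \<Sum>b<3^n. nsP n (w1, w2) (map fst xs) (out2 xs g) xs w1 b)
      = (\<Sum>g\<in>gs n. (\<Sum>t\<in>lists_n n. ind (xs = xenc n w1 w2 t) * ind (w1 = decn n (map fst xs))) / 3^n)"
      by (intro sum.cong refl) (use xs in \<open>simp add: nsP_b lsets_iff\<close>)
    then show "(\<Sum>g\<in>gs n. \<Sum>b<3^n. nsP n (w1, w2) (map fst xs) (out2 xs g) xs w1 b) / 2^n
      = (\<Sum>g\<in>gs n. \<Sum>t\<in>lists_n n. ind (xs = xenc n w1 w2 t) * ind (w1 = decn n (map fst xs))) / (2^n * 3^n)"
      by (simp only: sum_divide_distrib[symmetric] div_div_aux)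
  qed
  also have "\<dots> = (\<Sum>xs\<in>lists_n n. \<Sum>g\<in>gs n. \<Sum>t\<in>lists_n n.
        ind (xs = xenc n w1 w2 t) * ind (w1 = decn n (map fst xs))) / (2^n * 3^n)"
    by (simp add: sum_divide_distrib)
  also have "\<dots> = (\<Sum>g\<in>gs n. \<Sum>t\<in>lists_n n. \<Sum>xs\<in>lists_n n.
        ind (xs = xenc n w1 w2 t) * ind (w1 = decn n (map fst xs))) / (2^n * 3^n)"
    by (subst swap3) (rule refl)
  also have "\<dots> = (\<Sum>g\<in>gs n. \<Sum>t\<in>(lists_n n :: 3 list set). 1) / (2^n * 3^n)"
    by (intro arg_cong2[where f="(/)"] sum.cong refl)
       (simp add: sum_ind_eq map_fst_xenc w1)
  also have "\<dots> = 1" by (simp add: card_gs card_lists_n)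
  finally show ?thesis .
qed


lemma nsP_S2:
  assumes w2: "w2 < 3^n"
  shows "(\<Sum>xs\<in>lists_n n. \<Sum>ys1\<in>lists_n n. \<Sum>ys2\<in>lists_n n. \<Sum>a<3^n.
        nsP n (w1, w2) ys1 ys2 xs a w2 * chan_n bc3 xs ys1 ys2) = 1"
proof -
  have "(\<Sum>xs\<in>lists_n n. \<Sum>ys1\<in>lists_n n. \<Sum>ys2\<in>lists_n n. \<Sum>a<3^n.
        nsP n (w1, w2) ys1 ys2 xs a w2 * chan_n bc3 xs ys1 ys2)
     = (\<Sum>xs\<in>lists_n n. (\<Sum>g\<in>gs n. \<Sum>a<3^n. nsP n (w1, w2) (map fst xs) (out2 xs g) xs a w2) / 2^n)"
  proof (intro sum.cong refl)
    fix xs :: "(3\<times>3) list" assume "xs \<in> lists_n n"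
    then have "length xs = n" by simp
    from CH[OF this, of "\<lambda>ys1 ys2. \<Sum>a<3^n. nsP n (w1, w2) ys1 ys2 xs a w2"]
    show "(\<Sum>ys1\<in>lists_n n. \<Sum>ys2\<in>lists_n n. \<Sum>a<3^n. nsP n (w1, w2) ys1 ys2 xs a w2 * chan_n bc3 xs ys1 ys2)
        = (\<Sum>g\<in>gs n. \<Sum>a<3^n. nsP n (w1, w2) (map fst xs) (out2 xs g) xs a w2) / 2^n"
      by (simp add: sum_distrib_left sum_distrib_right mult.commute)
  qed
  also have "\<dots> = (\<Sum>xs\<in>lists_n n. (\<Sum>g\<in>gs n. \<Sum>t\<in>lists_n n.
        ind (xs = xenc n w1 w2 t) * ind (w2 = decn n (bdec (out2 xs g) (encn n w1) t))) / (2^n * 3^n))"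
  proof (intro sum.cong refl)
    fix xs :: "(3\<times>3) list" assume xs: "xs \<in> lists_n n"
    have "(\<Sum>g\<in>gs n. \<Sum>a<3^n. nsP n (w1, w2) (map fst xs) (out2 xs g) xs a w2)
      = (\<Sum>g\<in>gs n. (\<Sum>t\<in>lists_n n. ind (xs = xenc n w1 w2 t) * ind (w2 = decn n (bdec (out2 xs g) (encn n w1) t))) / 3^n)"
      by (intro sum.cong refl) (use xs in \<open>simp add: nsP_a\<close>)
    then show "(\<Sum>g\<in>gs n. \<Sum>a<3^n. nsP n (w1, w2) (map fst xs) (out2 xs g) xs a w2) / 2^n
      = (\<Sum>g\<in>gs n. \<Sum>t\<in>lists_n n. ind (xs = xenc n w1 w2 t) * ind (w2 = decn n (bdec (out2 xs g) (encn n w1) t))) / (2^n * 3^n)"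
      by (simp only: sum_divide_distrib[symmetric] div_div_aux)
  qed
  also have "\<dots> = (\<Sum>xs\<in>lists_n n. \<Sum>g\<in>gs n. \<Sum>t\<in>lists_n n.
        ind (xs = xenc n w1 w2 t) * ind (w2 = decn n (bdec (out2 xs g) (encn n w1) t))) / (2^n * 3^n)"
    by (simp add: sum_divide_distrib)
  also have "\<dots> = (\<Sum>g\<in>gs n. \<Sum>t\<in>lists_n n. \<Sum>xs\<in>lists_n n.
        ind (xs = xenc n w1 w2 t) * ind (w2 = decn n (bdec (out2 xs g) (encn n w1) t))) / (2^n * 3^n)"
    by (subst swap3) (rule refl)
  also have "\<dots> = (\<Sum>g\<in>gs n. \<Sum>t\<in>(lists_n n :: 3 list set). 1) / (2^n * 3^n)"
    by (intro arg_cong2[where f="(/)"] sum.cong refl)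
       (simp add: sum_ind_eq bdec_out2 w2 lsets_iff)
  also have "\<dots> = 1" by (simp add: card_gs card_lists_n)
  finally show ?thesis .
qed

lemma nsP_err1: "ns_err1 bc3 n (3^n) (3^n) (nsP n) = 0"
  unfolding ns_err1_def by (simp add: nsP_S1)

lemma nsP_err2: "ns_err2 bc3 n (3^n) (3^n) (nsP n) = 0"
  unfolding ns_err2_def by (simp add: nsP_S2)

lemma rate_ge_pow3: "rate_ge (\<lambda>n. 3^n) (log 2 3)"
  unfolding rate_ge_def
proof (intro allI impI)
  fix \<epsilon> :: real assume "\<epsilon> > 0"
  have "log 2 (real (3^n)) / real n \<ge> log 2 3 - \<epsilon>" if "n \<ge> 1" for n :: nat
    using that \<open>\<epsilon> > 0\<close> by (simp add: log_nat_power)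
  then show "eventually (\<lambda>n. log 2 (real (3^n)) / real n \<ge> log 2 3 - \<epsilon>) sequentially"
    unfolding eventually_sequentially by blast
qed

lemma ns_achievable: "achievable_ns bc3 (log 2 3, log 2 3)"
  unfolding achievable_ns_def
  apply (simp only: fst_conv snd_conv)
  apply (intro conjI)
  subgoal by simp
  subgoal by simp
  apply (rule exI[of _ "\<lambda>n. 3^n"], rule exI[of _ "\<lambda>n. 3^n"], rule exI[of _ nsP])
  apply (intro conjI allI)
  subgoal by (rule nsP_box)
  subgoal by (simp add: nsP_err1 nsP_err2)
  subgoal by (rule rate_ge_pow3)
  subgoal by (rule rate_ge_pow3)
  done


lemma log2_9: "log 2 9 = 2 * log 2 3"
proof -
  have "log 2 9 = log 2 (3^2)" by simp
  also have "\<dots> = 2 * log 2 3" by (subst log_nat_power) auto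
  finally show ?thesis .
qed

lemma ns_upper: "achievable_ns bc3 R \<Longrightarrow> fst R + snd R \<le> 2 * log 2 3"
proof -
  assume "achievable_ns bc3 R"
  then obtain m1 m2 :: "nat \<Rightarrow> nat" and P where
    box: "\<And>n. ns_box n (m1 n) (m2 n) (P n)" and
    lim: "(\<lambda>n. max (ns_err1 bc3 n (m1 n) (m2 n) (P n)) (ns_err2 bc3 n (m1 n) (m2 n) (P n))) \<longlonglongrightarrow> 0" and
    r1: "rate_ge m1 (fst R)" and r2: "rate_ge m2 (snd R)"
    unfolding achievable_ns_def by blast
  have "fst R + snd R \<le> log 2 9"
  proof (rule conv_asym[OF _ _ lim _ _ _ r1 r2, where K=1])
    show "\<And>n. m1 n \<ge> 1" "\<And>n. m2 n \<ge> 1" using box by (auto simp: ns_box_def)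
    show "\<And>n. real (m1 n * m2 n) * (1 - 1 * (ns_err1 bc3 n (m1 n) (m2 n) (P n) + ns_err2 bc3 n (m1 n) (m2 n) (P n))) \<le> 9^n"
      using ns_bound[OF box] by (simp add: diff_diff_eq)
  qed auto
  then show ?thesis by (simp add: log2_9)
qed

lemma closure_halfplane:
  assumes "\<And>R. R \<in> S \<Longrightarrow> fst R + snd R \<le> c" "R \<in> closure S"
  shows "fst R + snd R \<le> (c::real)"
proof -
  have cl: "closed {R :: real \<times> real. fst R + snd R \<le> c}"
    by (intro closed_Collect_le continuous_intros)
  have "S \<subseteq> {R. fst R + snd R \<le> c}" using assms(1) by auto
  then have "closure S \<subseteq> {R. fst R + snd R \<le> c}" using cl by (rule closure_minimal)
  then show ?thesis using assms(2) by auto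
qed

lemma ns_part: "is_sum_capacity (capacity_region_ns bc3) (2 * log 2 3)"
  unfolding is_sum_capacity_def capacity_region_ns_def
proof (intro conjI ballI)
  show "\<exists>R\<in>closure {R. achievable_ns bc3 R}. fst R + snd R = 2 * log 2 3"
    using ns_achievable by (intro bexI[of _ "(log 2 3, log 2 3)"]) (auto intro: closure_subset[THEN subsetD])
next
  fix R assume "R \<in> closure {R. achievable_ns bc3 R}"
  then show "fst R + snd R \<le> 2 * log 2 3"
    by (rule closure_halfplane[rotated]) (simp add: ns_upper)
qed

lemma semidet: "semi_deterministic bc3"
  unfolding semi_deterministic_def
proof (intro disjI1 exI[of _ fst] allI)
  fix x :: "3\<times>3" and y1 :: 3
  have "(\<Sum>y2\<in>UNIV. bc3 x (y1, y2)) = (\<Sum>y1'\<in>UNIV. \<Sum>y2\<in>UNIV. bc3 x (y1', y2) * (if y1' = y1 then 1 else 0))"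
  proof -
    have "(\<Sum>y1'\<in>UNIV. \<Sum>y2\<in>UNIV. bc3 x (y1', y2) * (if y1' = y1 then 1 else 0))
        = (\<Sum>y1'\<in>UNIV. if y1' = y1 then (\<Sum>y2\<in>UNIV. bc3 x (y1', y2)) else 0)"
      by (intro sum.cong) auto
    also have "\<dots> = (\<Sum>y2\<in>UNIV. bc3 x (y1, y2))" by (simp add: sum.delta')
    finally show ?thesis by simp
  qed
  also have "\<dots> = (if fst x = y1 then 1 else 0)"
    by (subst bc3_sum) simp
  finally show "(\<Sum>y2\<in>UNIV. bc3 x (y1, y2)) = (if y1 = fst x then 1 else 0)" by auto
qed


definition nega :: "3 list \<Rightarrow> 3 list" where "nega g = map uminus g"

lemma nega_gs: "g \<in> gs n \<Longrightarrow> nega g \<in> gs n"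
  by (auto simp: nega_def lsets_iff)

lemma nega_nega[simp]: "nega (nega g) = g"
  by (simp add: nega_def comp_def)

lemma sum_nega: "(\<Sum>g\<in>gs n. f (nega g)) = (\<Sum>g\<in>gs n. f g)"
  by (rule sum.reindex_bij_witness[of _ nega nega]) (auto simp: nega_gs)

lemma unit3: "g \<in> {1, -1::3} \<Longrightarrow> (2*g) * (2*g) = 1"
  by auto

lemma cancel3:
  fixes g a b c d :: 3
  assumes g: "g \<in> {1, -1}" and e1: "g*a + c = g*b + d" and e2: "(-g)*a + c = (-g)*b + d"
  shows "a = b \<and> c = d"
proof -
  have "2*g*a = 2*g*b"
  proof -
    have "2*g*a = (g*a + c) - ((-g)*a + c)" by (simp add: algebra_simps)
    also have "\<dots> = (g*b + d) - ((-g)*b + d)" using e1 e2 by simp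
    also have "\<dots> = 2*g*b" by (simp add: algebra_simps)
    finally show ?thesis .
  qed
  then have "(2*g)*(2*g*a) = (2*g)*(2*g*b)" by simp
  then have "(2*g)*(2*g)*a = (2*g)*(2*g)*b" by (simp only: mult.assoc)
  then have ab: "a = b" using unit3[OF g] by simp
  then show ?thesis using e1 by simp
qed

lemma out2_inj:
  assumes g: "g \<in> gs n" and x: "length x = n" and x': "length x' = n"
    and e1: "out2 x g = out2 x' g" and e2: "out2 x (nega g) = out2 x' (nega g)"
  shows "x = x'"
proof (rule nth_equalityI)
  show "length x = length x'" using x x' by simp
  fix i assume i: "i < length x"
  have "g ! i \<in> set g" using g i x by (simp add: lsets_iff)
  then have gi: "g ! i \<in> {1, -1}" using g by (auto simp: lsets_iff)
  have "out2 x g ! i = out2 x' g ! i" using e1 by simp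
  then have h1: "g!i * fst (x!i) + snd (x!i) = g!i * fst (x'!i) + snd (x'!i)"
    using i x x' g by (simp add: out2_def lsets_iff)
  have "out2 x (nega g) ! i = out2 x' (nega g) ! i" using e2 by simp
  then have h2: "(- g!i) * fst (x!i) + snd (x!i) = (- g!i) * fst (x'!i) + snd (x'!i)"
    using i x x' g by (simp add: out2_def nega_def lsets_iff)
  from cancel3[OF gi h1 h2] show "x ! i = x' ! i" by (simp add: prod_eq_iff)
qed

lemma multilin: 
  fixes a b c :: real
  assumes "0 \<le> a" "a \<le> 1" "0 \<le> b" "b \<le> 1" "0 \<le> c" "c \<le> 1"
  shows "a + (b + c)/2 \<le> 3/2 + a*b*c/2"
proof -
  have bc: "b*c \<le> 1" using assms by (simp add: mult_le_one)
  have "a * (1 - b*c/2) \<le> 1 * (1 - b*c/2)"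
    using assms bc by (intro mult_right_mono) auto
  moreover have "(1 - b) * (1 - c) \<ge> 0" using assms by simp
  ultimately have A: "a + b*c/2 \<le> 1 + a*(b*c)/2" and B: "b + c \<le> 1 + b*c"
    by (simp_all add: algebra_simps)
  from A B have "a + (b + c)/2 \<le> 3/2 + a*(b*c)/2" by (simp add: field_simps)
  then show ?thesis by (simp add: mult.assoc)
qed


lemma fiber_bound:
  fixes E :: "(3\<times>3) list \<Rightarrow> real" and D :: "3 list \<Rightarrow> real"
  assumes Enn: "\<And>x. x \<in> lists_n n \<Longrightarrow> E x \<ge> 0" and Esum: "(\<Sum>x\<in>lists_n n. E x) = 1"
    and Dnn: "\<And>v. v \<in> lists_n n \<Longrightarrow> D v \<ge> 0"
  shows "(\<Sum>x\<in>lists_n n. E x * D (map fst x)) \<le> (\<Sum>v\<in>lists_n n. D v)"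
proof -
  let ?L = "lists_n n :: (3\<times>3) list set"
  have "(\<Sum>x\<in>?L. E x * D (map fst x)) = (\<Sum>v\<in>map fst ` ?L. \<Sum>x\<in>{x\<in>?L. map fst x = v}. E x * D (map fst x))"
    by (rule sum.image_gen) simp
  also have "\<dots> = (\<Sum>v\<in>map fst ` ?L. D v * (\<Sum>x\<in>{x\<in>?L. map fst x = v}. E x))"
    by (intro sum.cong refl) (simp add: sum_distrib_left mult.commute)
  also have "\<dots> \<le> (\<Sum>v\<in>map fst ` ?L. D v * 1)"
  proof (intro sum_mono mult_left_mono)
    fix v assume v: "v \<in> map fst ` ?L"
    have "(\<Sum>x\<in>{x\<in>?L. map fst x = v}. E x) \<le> (\<Sum>x\<in>?L. E x)"
      by (intro sum_mono2) (auto intro: Enn)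
    then show "(\<Sum>x\<in>{x\<in>?L. map fst x = v}. E x) \<le> 1" using Esum by simp
    show "D v \<ge> 0" using v by (auto intro: Dnn)
  qed
  also have "\<dots> = (\<Sum>v\<in>map fst ` ?L. D v)" by simp
  also have "\<dots> \<le> (\<Sum>v\<in>lists_n n. D v)"
    by (rule sum_mono2) (auto intro: Dnn)
  finally show ?thesis .
qed

lemma out2_zip: "length x = length g \<Longrightarrow> out2 x g = zip (map (\<lambda>(xi, gi). gi * fst xi + snd xi) (zip x g)) g"
  by (intro nth_equalityI) (auto simp: out2_def)

lemma card_Yg: "card ((\<lambda>x. out2 x g) ` (lists_n n :: (3\<times>3) list set)) \<le> 3^n" if "length g = n"
proof -
  have "(\<lambda>x. out2 x g) ` (lists_n n :: (3\<times>3) list set) \<subseteq> (\<lambda>a. zip a g) ` (lists_n n :: 3 list set)"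
  proof
    fix y assume "y \<in> (\<lambda>x. out2 x g) ` (lists_n n :: (3\<times>3) list set)"
    then obtain x :: "(3\<times>3) list" where x: "length x = n" and y: "y = out2 x g" by auto
    show "y \<in> (\<lambda>a. zip a g) ` (lists_n n :: 3 list set)"
      using x that by (auto simp: y out2_zip intro!: image_eqI)
  qed
  then have "card ((\<lambda>x. out2 x g) ` (lists_n n :: (3\<times>3) list set)) \<le> card ((\<lambda>a. zip a g) ` (lists_n n :: 3 list set))"
    by (intro card_mono) auto
  also have "\<dots> \<le> card (lists_n n :: 3 list set)" by (rule card_image_le) simp
  finally show ?thesis by (simp add: card_lists_n)
qed

lemma sqrt_comb:
  fixes T A v u :: real
  assumes "0 \<le> T" "T \<le> A" "T \<le> v * u" "0 \<le> v" "0 \<le> u"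
  shows "T \<le> sqrt A * ((v + u) / 2)"
proof -
  have A0: "A \<ge> 0" using assms by simp
  have "T^2 = T * T" by (simp add: power2_eq_square)
  also have "\<dots> \<le> A * (v * u)" using assms by (intro mult_mono) auto
  also have "\<dots> \<le> A * ((v + u) / 2)^2"
  proof (rule mult_left_mono)
    have "((v + u) / 2)^2 - v * u = ((v - u)/2)^2" by (simp add: power2_eq_square field_simps)
    then show "v * u \<le> ((v + u) / 2)^2" by (smt (verit) zero_le_power2)
  qed (rule A0)
  also have "\<dots> = (sqrt A * ((v + u) / 2))^2" using A0 by (simp only: power_mult_distrib real_sqrt_pow2)
  finally have "T^2 \<le> (sqrt A * ((v + u) / 2))^2" .
  then show ?thesis
    by (rule power2_le_imp_le) (use assms A0 in simp)
qed


lemma scheme_facts: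
  assumes "classical_scheme n m1 m2 E D1 D2"
  shows "\<And>w1 w2 x. w1 < m1 \<Longrightarrow> w2 < m2 \<Longrightarrow> x \<in> lists_n n \<Longrightarrow> E w1 w2 x \<ge> 0"
    and "\<And>w1 w2. w1 < m1 \<Longrightarrow> w2 < m2 \<Longrightarrow> (\<Sum>x\<in>lists_n n. E w1 w2 x) = 1"
    and "\<And>ys w. ys \<in> lists_n n \<Longrightarrow> w < m1 \<Longrightarrow> D1 ys w \<ge> 0"
    and "\<And>ys. ys \<in> lists_n n \<Longrightarrow> (\<Sum>w<m1. D1 ys w) = 1"
    and "\<And>ys w. ys \<in> lists_n n \<Longrightarrow> w < m2 \<Longrightarrow> D2 ys w \<ge> 0"
    and "\<And>ys. ys \<in> lists_n n \<Longrightarrow> (\<Sum>w<m2. D2 ys w) = 1"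
    and "m1 \<ge> 1" and "m2 \<ge> 1"
  using assms unfolding classical_scheme_def by blast+

lemma le_one_of_sum:
  fixes f :: "'a \<Rightarrow> real"
  assumes "finite A" "\<And>x. x \<in> A \<Longrightarrow> f x \<ge> 0" "sum f A = 1" "a \<in> A"
  shows "f a \<le> 1"
  using member_le_sum[of a A f] assms by auto

lemma Qg_bound:
  fixes E :: "nat \<Rightarrow> nat \<Rightarrow> (3\<times>3) list \<Rightarrow> real" and D1 :: "3 list \<Rightarrow> nat \<Rightarrow> real"
    and D2 :: "(3\<times>3) list \<Rightarrow> nat \<Rightarrow> real"
  assumes sch: "classical_scheme n m1 m2 E D1 D2" and g: "g \<in> gs n"
  shows "(\<Sum>w2<m2. \<Sum>w1<m1. \<Sum>x\<in>lists_n n. E w1 w2 x * D1 (map fst x) w1 * D2 (out2 x g) w2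
            * D2 (out2 x (nega g)) w2) \<le> 3^n * sqrt (3^n)"
proof -
  let ?L = "lists_n n :: (3\<times>3) list set"
  let ?L3 = "lists_n n :: 3 list set"
  note F = scheme_facts[OF sch]
  have Ele: "E w1 w2 x \<le> 1" if "w1 < m1" "w2 < m2" "x \<in> ?L" for w1 w2 x
    by (rule le_one_of_sum[of ?L]) (use that F in auto)
  have D1le: "D1 ys w \<le> 1" if "ys \<in> ?L3" "w < m1" for ys w
    by (rule le_one_of_sum[of "{..<m1}"]) (use that F in auto)
  have D2le: "D2 ys w \<le> 1" if "ys \<in> ?L" "w < m2" for ys w
    by (rule le_one_of_sum[of "{..<m2}"]) (use that F in auto)
  have ng: "nega g \<in> gs n" using g by (rule nega_gs)
  have o2: "out2 x h \<in> ?L" if "x \<in> ?L" "h \<in> gs n" for x h using that by (simp add: lsets_iff)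
  define T where "T w2 = (\<Sum>w1<m1. \<Sum>x\<in>?L. E w1 w2 x * D1 (map fst x) w1 * D2 (out2 x g) w2
            * D2 (out2 x (nega g)) w2)" for w2
  define Y where "Y h = (\<lambda>x. out2 x h) ` ?L" for h
  define V where "V h w2 = (\<Sum>y\<in>Y h. D2 y w2)" for h w2
  have YL: "Y h \<subseteq> ?L" if "h \<in> gs n" for h using that o2 by (auto simp: Y_def)
  have finY: "finite (Y h)" for h by (simp add: Y_def)
  have Vnn: "V h w2 \<ge> 0" if "h \<in> gs n" "w2 < m2" for h w2
    unfolding V_def by (intro sum_nonneg) (use that YL F in blast)
  have SV: "(\<Sum>w2<m2. V h w2) \<le> 3^n" if h: "h \<in> gs n" for h
  proof -
    have "(\<Sum>w2<m2. V h w2) = (\<Sum>y\<in>Y h. \<Sum>w2<m2. D2 y w2)"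
      unfolding V_def by (rule sum.swap)
    also have "\<dots> = (\<Sum>y\<in>Y h. 1)" by (intro sum.cong refl) (use YL[OF h] F in blast)
    also have "\<dots> = real (card (Y h))" by simp
    also have "\<dots> \<le> 3^n" unfolding Y_def using card_Yg[of h n] h
      by (simp add: lsets_iff)
    finally show ?thesis .
  qed
  have Tb: "T w2 \<le> sqrt (3^n) * ((V g w2 + V (nega g) w2) / 2)" if w2: "w2 < m2" for w2
  proof (rule sqrt_comb)
    have nn: "E w1 w2 x * D1 (map fst x) w1 \<ge> 0" if "w1 < m1" "x \<in> ?L" for w1 x
      using that w2 F by (intro mult_nonneg_nonneg) auto
    have bnn: "D2 (out2 x g) w2 * D2 (out2 x (nega g)) w2 \<ge> 0" "D2 (out2 x g) w2 * D2 (out2 x (nega g)) w2 \<le> 1"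
      if "x \<in> ?L" for x
      using that w2 F o2 g ng D2le by (auto intro!: mult_nonneg_nonneg mult_le_one)
    show "0 \<le> T w2" unfolding T_def
    proof (intro sum_nonneg)
      fix w1 x assume a: "w1 \<in> {..<m1}" "x \<in> ?L"
      have "E w1 w2 x * D1 (map fst x) w1 * D2 (out2 x g) w2 * D2 (out2 x (nega g)) w2
         = (E w1 w2 x * D1 (map fst x) w1) * (D2 (out2 x g) w2 * D2 (out2 x (nega g)) w2)"
        by (simp add: mult.assoc)
      also have "\<dots> \<ge> 0"
      proof -
        have h1: "0 \<le> E w1 w2 x * D1 (map fst x) w1" using nn[of w1 x] a by auto
        have h2: "0 \<le> D2 (out2 x g) w2 * D2 (out2 x (nega g)) w2" using bnn(1)[of x] a by auto
        show ?thesis by (rule mult_nonneg_nonneg[OF h1 h2])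
      qed
      finally show "0 \<le> E w1 w2 x * D1 (map fst x) w1 * D2 (out2 x g) w2 * D2 (out2 x (nega g)) w2" .
    qed
    show "0 \<le> V g w2" "0 \<le> V (nega g) w2" using Vnn g ng w2 by auto
    have "T w2 \<le> (\<Sum>w1<m1. \<Sum>x\<in>?L. E w1 w2 x * D1 (map fst x) w1)"
      unfolding T_def
    proof (intro sum_mono)
      fix w1 x assume "w1 \<in> {..<m1}" "x \<in> ?L"
      then have h1: "0 \<le> E w1 w2 x * D1 (map fst x) w1" and
        h2: "D2 (out2 x g) w2 * D2 (out2 x (nega g)) w2 \<le> 1" using nn bnn by auto
      have "E w1 w2 x * D1 (map fst x) w1 * D2 (out2 x g) w2 * D2 (out2 x (nega g)) w2
         = (E w1 w2 x * D1 (map fst x) w1) * (D2 (out2 x g) w2 * D2 (out2 x (nega g)) w2)"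
        by (simp add: mult.assoc)
      also have "\<dots> \<le> E w1 w2 x * D1 (map fst x) w1" by (rule mult_left_le[OF h2 h1])
      finally show "E w1 w2 x * D1 (map fst x) w1 * D2 (out2 x g) w2 * D2 (out2 x (nega g)) w2
          \<le> E w1 w2 x * D1 (map fst x) w1" .
    qed
    also have "\<dots> \<le> (\<Sum>w1<m1. \<Sum>v\<in>?L3. D1 v w1)"
      by (intro sum_mono fiber_bound) (use w2 F in auto)
    also have "\<dots> = (\<Sum>v\<in>?L3. \<Sum>w1<m1. D1 v w1)" by (rule sum.swap)
    also have "\<dots> = (\<Sum>v\<in>?L3. 1)" by (intro sum.cong refl) (use F in auto)
    also have "\<dots> = 3^n" by (simp add: card_lists_n)
    finally show "T w2 \<le> 3^n" .
    have "T w2 = (\<Sum>x\<in>?L. (\<Sum>w1<m1. E w1 w2 x * D1 (map fst x) w1) * (D2 (out2 x g) w2 * D2 (out2 x (nega g)) w2))"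
      unfolding T_def by (subst sum.swap) (simp add: sum_distrib_right mult.assoc)
    also have "\<dots> \<le> (\<Sum>x\<in>?L. 1 * (D2 (out2 x g) w2 * D2 (out2 x (nega g)) w2))"
    proof (intro sum_mono mult_right_mono)
      fix x assume x: "x \<in> ?L"
      have "(\<Sum>w1<m1. E w1 w2 x * D1 (map fst x) w1) \<le> (\<Sum>w1<m1. D1 (map fst x) w1)"
        by (intro sum_mono mult_left_le_one_le) (use x w2 F Ele in auto)
      also have "\<dots> = 1" using x F by simp
      finally show "(\<Sum>w1<m1. E w1 w2 x * D1 (map fst x) w1) \<le> 1" .
      show "0 \<le> D2 (out2 x g) w2 * D2 (out2 x (nega g)) w2" using bnn x by auto
    qed
    also have "\<dots> = (\<Sum>p\<in>(\<lambda>x. (out2 x g, out2 x (nega g))) ` ?L. D2 (fst p) w2 * D2 (snd p) w2)"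
    proof -
      have "inj_on (\<lambda>x. (out2 x g, out2 x (nega g))) ?L"
        by (rule inj_onI) (use out2_inj[OF g] in auto)
      then show ?thesis by (simp add: sum.reindex)
    qed
    also have "\<dots> \<le> (\<Sum>p\<in>Y g \<times> Y (nega g). D2 (fst p) w2 * D2 (snd p) w2)"
    proof (rule sum_mono2)
      show "finite (Y g \<times> Y (nega g))" using finY by simp
      show "(\<lambda>x. (out2 x g, out2 x (nega g))) ` ?L \<subseteq> Y g \<times> Y (nega g)" by (auto simp: Y_def)
      fix p assume "p \<in> Y g \<times> Y (nega g) - (\<lambda>x. (out2 x g, out2 x (nega g))) ` ?L"
      then have "fst p \<in> Y g" "snd p \<in> Y (nega g)" by auto
      then have "fst p \<in> ?L" "snd p \<in> ?L" using YL[OF g] YL[OF ng] by auto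
      then show "0 \<le> D2 (fst p) w2 * D2 (snd p) w2" using F w2 by (auto intro: mult_nonneg_nonneg)
    qed
    also have "\<dots> = V g w2 * V (nega g) w2"
      unfolding V_def by (simp add: sum_product sum.cartesian_product case_prod_beta)
    finally show "T w2 \<le> V g w2 * V (nega g) w2" .
  qed
  have "(\<Sum>w2<m2. T w2) \<le> (\<Sum>w2<m2. sqrt (3^n) * ((V g w2 + V (nega g) w2) / 2))"
    by (intro sum_mono Tb) auto
  also have "\<dots> = (\<Sum>w2<m2. (sqrt (3^n) / 2) * V g w2 + (sqrt (3^n) / 2) * V (nega g) w2)"
    by (intro sum.cong refl) (simp add: field_simps)
  also have "\<dots> = (sqrt (3^n) / 2) * (\<Sum>w2<m2. V g w2) + (sqrt (3^n) / 2) * (\<Sum>w2<m2. V (nega g) w2)"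
    by (simp add: sum.distrib sum_distrib_left)
  also have "\<dots> \<le> (sqrt (3^n) / 2) * 3^n + (sqrt (3^n) / 2) * 3^n"
    using SV[OF g] SV[OF ng] by (intro add_mono mult_left_mono) auto
  also have "\<dots> = 3^n * sqrt (3^n)" by simp
  finally show ?thesis unfolding T_def .
qed


lemma swap_in4: "(\<Sum>a\<in>A. \<Sum>b\<in>B. \<Sum>c\<in>C. \<Sum>d\<in>D. f a b c d) = (\<Sum>d\<in>D. \<Sum>a\<in>A. \<Sum>b\<in>B. \<Sum>c\<in>C. f a b c d)"
proof -
  have "(\<Sum>a\<in>A. \<Sum>b\<in>B. \<Sum>c\<in>C. \<Sum>d\<in>D. f a b c d) = (\<Sum>a\<in>A. \<Sum>b\<in>B. \<Sum>d\<in>D. \<Sum>c\<in>C. f a b c d)"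
    by (intro sum.cong refl) (rule sum.swap)
  also have "\<dots> = (\<Sum>a\<in>A. \<Sum>d\<in>D. \<Sum>b\<in>B. \<Sum>c\<in>C. f a b c d)"
    by (intro sum.cong refl) (rule sum.swap)
  also have "\<dots> = (\<Sum>d\<in>D. \<Sum>a\<in>A. \<Sum>b\<in>B. \<Sum>c\<in>C. f a b c d)"
    by (rule sum.swap)
  finally show ?thesis .
qed

lemma cl_bound:
  fixes E :: "nat \<Rightarrow> nat \<Rightarrow> (3\<times>3) list \<Rightarrow> real" and D1 :: "3 list \<Rightarrow> nat \<Rightarrow> real"
    and D2 :: "(3\<times>3) list \<Rightarrow> nat \<Rightarrow> real"
  assumes sch: "classical_scheme n m1 m2 E D1 D2"
  shows "real (m1 * m2) * (1 - 2 * (classical_err1 bc3 n m1 m2 E D1 + classical_err2 bc3 n m1 m2 E D2))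
     \<le> (3 * sqrt 3)^n"
proof -
  let ?L = "lists_n n :: (3\<times>3) list set"
  note F = scheme_facts[OF sch]
  define M where "M = real m1 * real m2"
  have Mpos: "M > 0" using F by (simp add: M_def)
  define B :: real where "B = 3^n * sqrt (3^n)"
  have B: "(3 * sqrt 3)^n = B" by (simp add: B_def power_mult_distrib real_sqrt_power)
  define a1 where "a1 w1 w2 x = E w1 w2 x * ((\<Sum>g\<in>gs n. D1 (map fst x) w1) / 2^n)" for w1 w2 x
  define a2 where "a2 w1 w2 x = E w1 w2 x * ((\<Sum>g\<in>gs n. D2 (out2 x g) w2) / 2^n)" for w1 w2 x
  define q where "q w1 w2 x g = E w1 w2 x * D1 (map fst x) w1 * D2 (out2 x g) w2 * D2 (out2 x (nega g)) w2"
    for w1 w2 x g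
  have S1: "(\<Sum>w1<m1. \<Sum>w2<m2. \<Sum>xs\<in>?L. \<Sum>ys1\<in>lists_n n. \<Sum>ys2\<in>lists_n n.
        E w1 w2 xs * chan_n bc3 xs ys1 ys2 * D1 ys1 w1) = (\<Sum>w1<m1. \<Sum>w2<m2. \<Sum>xs\<in>?L. a1 w1 w2 xs)"
  proof (intro sum.cong refl)
    fix w1 w2 and xs :: "(3\<times>3) list" assume "xs \<in> ?L"
    then have "length xs = n" by simp
    note ch = CH[OF this, of "\<lambda>ys1 ys2. D1 ys1 w1"]
    have "(\<Sum>ys1\<in>lists_n n. \<Sum>ys2\<in>lists_n n. E w1 w2 xs * chan_n bc3 xs ys1 ys2 * D1 ys1 w1)
       = E w1 w2 xs * (\<Sum>ys1\<in>lists_n n. \<Sum>ys2\<in>lists_n n. chan_n bc3 xs ys1 ys2 * D1 ys1 w1)"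
      by (simp add: sum_distrib_left mult.assoc)
    also have "\<dots> = a1 w1 w2 xs" unfolding ch a1_def ..
    finally show "(\<Sum>ys1\<in>lists_n n. \<Sum>ys2\<in>lists_n n. E w1 w2 xs * chan_n bc3 xs ys1 ys2 * D1 ys1 w1) = a1 w1 w2 xs" .
  qed
  have S2: "(\<Sum>w1<m1. \<Sum>w2<m2. \<Sum>xs\<in>?L. \<Sum>ys1\<in>lists_n n. \<Sum>ys2\<in>lists_n n.
        E w1 w2 xs * chan_n bc3 xs ys1 ys2 * D2 ys2 w2) = (\<Sum>w1<m1. \<Sum>w2<m2. \<Sum>xs\<in>?L. a2 w1 w2 xs)"
  proof (intro sum.cong refl)
    fix w1 w2 and xs :: "(3\<times>3) list" assume "xs \<in> ?L"
    then have "length xs = n" by simp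
    note ch = CH[OF this, of "\<lambda>ys1 ys2. D2 ys2 w2"]
    have "(\<Sum>ys1\<in>lists_n n. \<Sum>ys2\<in>lists_n n. E w1 w2 xs * chan_n bc3 xs ys1 ys2 * D2 ys2 w2)
       = E w1 w2 xs * (\<Sum>ys1\<in>lists_n n. \<Sum>ys2\<in>lists_n n. chan_n bc3 xs ys1 ys2 * D2 ys2 w2)"
      by (simp add: sum_distrib_left mult.assoc)
    also have "\<dots> = a2 w1 w2 xs" unfolding ch a2_def ..
    finally show "(\<Sum>ys1\<in>lists_n n. \<Sum>ys2\<in>lists_n n. E w1 w2 xs * chan_n bc3 xs ys1 ys2 * D2 ys2 w2) = a2 w1 w2 xs" .
  qed
  have pw: "a1 w1 w2 x + a2 w1 w2 x \<le> 3/2 * E w1 w2 x + (\<Sum>g\<in>gs n. q w1 w2 x g) / (2 * 2^n)"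
    if w1: "w1 < m1" and w2: "w2 < m2" and x: "x \<in> ?L" for w1 w2 x
  proof -
    let ?al = "D1 (map fst x) w1"
    let ?be = "\<lambda>g. D2 (out2 x g) w2"
    have o2: "out2 x h \<in> ?L" if "h \<in> gs n" for h using that x by (simp add: lsets_iff)
    have al: "0 \<le> ?al" "?al \<le> 1"
      using x w1 F le_one_of_sum[of "{..<m1}" "D1 (map fst x)" w1] by auto
    have be: "0 \<le> ?be g" "?be g \<le> 1" if "g \<in> gs n" for g
      using o2[OF that] w2 F le_one_of_sum[of "{..<m2}" "D2 (out2 x g)" w2] by auto
    have "(\<Sum>g\<in>gs n. ?al) + (\<Sum>g\<in>gs n. ?be g) = (\<Sum>g\<in>gs n. ?al) + ((\<Sum>g\<in>gs n. ?be g) + (\<Sum>g\<in>gs n. ?be (nega g))) / 2"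
      using sum_nega[of "?be" n] by simp
    also have "\<dots> = (\<Sum>g\<in>gs n. ?al + (?be g + ?be (nega g)) / 2)"
      by (simp only: sum.distrib sum_divide_distrib[symmetric])
    also have "\<dots> \<le> (\<Sum>g\<in>gs n. 3/2 + ?al * ?be g * ?be (nega g) / 2)"
      by (intro sum_mono multilin) (use al be nega_gs in auto)
    also have "\<dots> = 3/2 * 2^n + (\<Sum>g\<in>gs n. ?al * ?be g * ?be (nega g)) / 2"
      by (simp add: sum.distrib sum_divide_distrib card_gs)
    finally have main: "(\<Sum>g\<in>gs n. ?al) + (\<Sum>g\<in>gs n. ?be g)
        \<le> 3/2 * 2^n + (\<Sum>g\<in>gs n. ?al * ?be g * ?be (nega g)) / 2" .
    have Enn: "E w1 w2 x \<ge> 0" using F w1 w2 x by auto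
    have "a1 w1 w2 x + a2 w1 w2 x = E w1 w2 x * (((\<Sum>g\<in>gs n. ?al) + (\<Sum>g\<in>gs n. ?be g)) / 2^n)"
      by (simp add: a1_def a2_def algebra_simps add_divide_distrib)
    also have "\<dots> \<le> E w1 w2 x * ((3/2 * 2^n + (\<Sum>g\<in>gs n. ?al * ?be g * ?be (nega g)) / 2) / 2^n)"
      using main Enn by (intro mult_left_mono divide_right_mono) auto
    also have "\<dots> = 3/2 * E w1 w2 x + (\<Sum>g\<in>gs n. q w1 w2 x g) / (2 * 2^n)"
      by (simp add: q_def field_simps sum_distrib_left)
    finally show ?thesis .
  qed
  have "(\<Sum>w1<m1. \<Sum>w2<m2. \<Sum>xs\<in>?L. a1 w1 w2 xs) + (\<Sum>w1<m1. \<Sum>w2<m2. \<Sum>xs\<in>?L. a2 w1 w2 xs)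
      = (\<Sum>w1<m1. \<Sum>w2<m2. \<Sum>xs\<in>?L. a1 w1 w2 xs + a2 w1 w2 xs)"
    by (simp add: sum.distrib)
  also have "\<dots> \<le> (\<Sum>w1<m1. \<Sum>w2<m2. \<Sum>xs\<in>?L. 3/2 * E w1 w2 xs + (\<Sum>g\<in>gs n. q w1 w2 xs g) / (2 * 2^n))"
    by (intro sum_mono pw) auto
  also have "\<dots> = 3/2 * (\<Sum>w1<m1. \<Sum>w2<m2. \<Sum>xs\<in>?L. E w1 w2 xs)
      + (\<Sum>w1<m1. \<Sum>w2<m2. \<Sum>xs\<in>?L. \<Sum>g\<in>gs n. q w1 w2 xs g) / (2 * 2^n)"
    by (simp add: sum.distrib sum_distrib_left sum_divide_distrib)
  also have "(\<Sum>w1<m1. \<Sum>w2<m2. \<Sum>xs\<in>?L. E w1 w2 xs) = M"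
    using F by (simp add: M_def)
  also have "(\<Sum>w1<m1. \<Sum>w2<m2. \<Sum>xs\<in>?L. \<Sum>g\<in>gs n. q w1 w2 xs g)
      = (\<Sum>g\<in>gs n. \<Sum>w1<m1. \<Sum>w2<m2. \<Sum>xs\<in>?L. q w1 w2 xs g)"
    by (rule swap_in4)
  also have "\<dots> \<le> (\<Sum>g\<in>gs n. B)"
  proof (rule sum_mono)
    fix g assume g: "g \<in> gs n"
    have "(\<Sum>w1<m1. \<Sum>w2<m2. \<Sum>xs\<in>?L. q w1 w2 xs g) = (\<Sum>w2<m2. \<Sum>w1<m1. \<Sum>xs\<in>?L. q w1 w2 xs g)"
      by (rule sum.swap)
    also have "\<dots> \<le> B" unfolding q_def B_def by (rule Qg_bound[OF sch g])
    finally show "(\<Sum>w1<m1. \<Sum>w2<m2. \<Sum>xs\<in>?L. q w1 w2 xs g) \<le> B" .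
  qed
  also have "(\<Sum>g\<in>gs n. B) = 2^n * B" by (simp add: card_gs)
  finally have main: "(\<Sum>w1<m1. \<Sum>w2<m2. \<Sum>xs\<in>?L. a1 w1 w2 xs) + (\<Sum>w1<m1. \<Sum>w2<m2. \<Sum>xs\<in>?L. a2 w1 w2 xs)
      \<le> 3/2 * M + B / 2"
    by (simp add: divide_right_mono)
  have MM: "real m1 * real m2 = M" by (simp add: M_def)
  have gen: "M * (1 - 2 * ((1 - s1 / M) + (1 - s2 / M))) \<le> B" if "s1 + s2 \<le> 3/2 * M + B / 2" for s1 s2
  proof -
    have "M * (1 - 2 * ((1 - s1 / M) + (1 - s2 / M))) = 2 * (M * (s1 / M)) + 2 * (M * (s2 / M)) - 3 * M"
      by (simp add: algebra_simps)
    also have "\<dots> = 2 * s1 + 2 * s2 - 3 * M" using Mpos by simp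
    finally show ?thesis using that by simp
  qed
  show ?thesis
    unfolding classical_err1_def classical_err2_def S1 S2 of_nat_mult MM B
    by (rule gen[OF main])
qed


lemma log2_3sqrt3: "log 2 (3 * sqrt 3) = 3/2 * log 2 3"
proof -
  have h: "sqrt 3 = 3 powr (1/2)" by (simp add: powr_half_sqrt)
  have h2: "log 2 (sqrt 3) = 1/2 * log 2 3" unfolding h by (simp add: log_powr)
  have "log 2 (3 * sqrt 3) = log 2 3 + log 2 (sqrt 3)" by (simp add: log_mult)
  then show ?thesis using h2 by simp
qed

lemma cl_upper: "achievable_classical bc3 R \<Longrightarrow> fst R + snd R \<le> 3/2 * log 2 3"
proof -
  assume "achievable_classical bc3 R"
  then obtain m1 m2 :: "nat \<Rightarrow> nat" and E D1 D2 where
    sch: "\<And>n. classical_scheme n (m1 n) (m2 n) (E n) (D1 n) (D2 n)" and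
    lim: "(\<lambda>n. max (classical_err1 bc3 n (m1 n) (m2 n) (E n) (D1 n))
                  (classical_err2 bc3 n (m1 n) (m2 n) (E n) (D2 n))) \<longlonglongrightarrow> 0" and
    r1: "rate_ge m1 (fst R)" and r2: "rate_ge m2 (snd R)"
    unfolding achievable_classical_def by blast
  have "fst R + snd R \<le> log 2 (3 * sqrt 3)"
  proof (rule conv_asym[OF _ _ lim _ _ _ r1 r2, where K=2])
    show "\<And>n. m1 n \<ge> 1" "\<And>n. m2 n \<ge> 1" using sch by (auto simp: classical_scheme_def)
    show "\<And>n. real (m1 n * m2 n) * (1 - 2 * (classical_err1 bc3 n (m1 n) (m2 n) (E n) (D1 n)
        + classical_err2 bc3 n (m1 n) (m2 n) (E n) (D2 n))) \<le> (3 * sqrt 3)^n"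
      by (rule cl_bound[OF sch])
  qed auto
  then show ?thesis by (simp add: log2_3sqrt3)
qed


definition Nc :: "3 list \<Rightarrow> nat" where "Nc g = length (filter (\<lambda>a. a = 1) g)"

lemma Nc_Cons[simp]: "Nc (a # g) = (if a = 1 then 1 else 0) + Nc g"
  by (simp add: Nc_def)

lemma Nc_le: "Nc g \<le> length g" by (simp add: Nc_def)

definition agrS :: "3 list \<Rightarrow> 3 list \<Rightarrow> 3 list \<Rightarrow> bool" where
  "agrS g u v = (\<forall>i<length g. g ! i = 1 \<longrightarrow> u ! i = v ! i)"

lemma agrS_Cons[simp]: "agrS (a # g) (b # u) (c # v) = ((a = 1 \<longrightarrow> b = c) \<and> agrS g u v)"
  unfolding agrS_def by (auto simp: nth_Cons split: nat.splits)

lemma ind_conj: "ind (P \<and> Q) = ind P * ind Q" by (simp add: ind_def)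

lemma count_agr:
  "g \<in> gs n \<Longrightarrow> u \<in> lists_n n \<Longrightarrow> (\<Sum>v\<in>lists_n n. ind (agrS g u v)) = 3^n / 3^(Nc g)"
proof (induction n arbitrary: g u)
  case 0
  then show ?case by (simp add: agrS_def lsets_iff Nc_def)
next
  case (Suc n)
  from Suc.prems obtain a g' where g: "g = a # g'" and g': "g' \<in> gs n" and a: "a \<in> {1, -1}"
    by (cases g) (auto simp: lsets_iff)
  from Suc.prems obtain b u' where u: "u = b # u'" and u': "u' \<in> lists_n n"
    by (cases u) auto
  have "(\<Sum>v\<in>lists_n (Suc n). ind (agrS g u v)) = (\<Sum>c\<in>UNIV. \<Sum>v\<in>lists_n n. ind (agrS g u (c # v)))"
    by (rule sum_lists_n_Suc)
  also have "\<dots> = (\<Sum>c\<in>UNIV. ind (a = 1 \<longrightarrow> b = c) * (\<Sum>v\<in>lists_n n. ind (agrS g' u' v)))"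
    by (simp add: g u sum_distrib_left ind_conj)
  also have "\<dots> = (\<Sum>c\<in>(UNIV::3 set). ind (a = 1 \<longrightarrow> b = c)) * (3^n / 3^(Nc g'))"
    by (simp only: Suc.IH[OF g' u'] sum_distrib_right)
  also have "(\<Sum>c\<in>(UNIV::3 set). ind (a = 1 \<longrightarrow> b = c)) = (if a = 1 then 1 else 3)"
  proof (cases "a = 1")
    case True
    have "(\<Sum>c\<in>(UNIV::3 set). ind (a = 1 \<longrightarrow> b = c)) = (\<Sum>c\<in>UNIV. ind (c = b))"
      by (rule sum.cong) (auto simp: ind_def True)
    also have "\<dots> = 1" by (rule sum_ind_eq') auto
    finally show ?thesis using True by simp
  next
    case False
    then show ?thesis by simp
  qed
  finally have "(\<Sum>v\<in>lists_n (Suc n). ind (agrS g u v)) = (if a = 1 then 1 else 3) * (3^n / 3^(Nc g'))" .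
  then show ?case by (cases "a = 1") (simp_all add: g)
qed


lemma prod_two:
  assumes "finite I" "a \<in> I" "b \<in> I" "a \<noteq> b"
  shows "(\<Prod>i\<in>I. F i) = F a * F b * (\<Prod>i\<in>I - {a} - {b}. (F i :: real))"
proof -
  have "(\<Prod>i\<in>I. F i) = F a * (\<Prod>i\<in>I - {a}. F i)" using assms by (simp add: prod.remove)
  also have "(\<Prod>i\<in>I - {a}. F i) = F b * (\<Prod>i\<in>I - {a} - {b}. F i)"
    using assms by (intro prod.remove) auto
  finally show ?thesis by (simp add: mult.assoc)
qed

lemma sum_PiE_pair_ind:
  fixes A :: "'b set"
  assumes I: "finite I" "a \<in> I" "b \<in> I" "a \<noteq> b" and A: "finite A" and u: "u \<in> A" and v: "v \<in> A"
  shows "(\<Sum>c\<in>PiE I (\<lambda>_. A). ind (u = c a) * ind (v = c b)) = real (card A) ^ (card I - 2)"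
proof -
  define f where "f i x = (if i = a then ind (u = x) else if i = b then ind (v = x) else 1)" for i x
  have "(\<Prod>i\<in>I. \<Sum>x\<in>A. f i x) = (\<Sum>c\<in>PiE I (\<lambda>_. A). \<Prod>i\<in>I. f i (c i))"
    by (rule prod_sum_PiE) (use I A in auto)
  also have "\<dots> = (\<Sum>c\<in>PiE I (\<lambda>_. A). ind (u = c a) * ind (v = c b))"
  proof (rule sum.cong[OF refl])
    fix c
    have "(\<Prod>i\<in>I. f i (c i)) = f a (c a) * f b (c b) * (\<Prod>i\<in>I - {a} - {b}. f i (c i))"
      by (rule prod_two[OF I])
    also have "(\<Prod>i\<in>I - {a} - {b}. f i (c i)) = 1"
      by (intro prod.neutral) (auto simp: f_def)
    finally show "(\<Prod>i\<in>I. f i (c i)) = ind (u = c a) * ind (v = c b)" using I by (simp add: f_def)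
  qed
  finally have "(\<Sum>c\<in>PiE I (\<lambda>_. A). ind (u = c a) * ind (v = c b)) = (\<Prod>i\<in>I. \<Sum>x\<in>A. f i x)" ..
  also have "\<dots> = (\<Sum>x\<in>A. f a x) * (\<Sum>x\<in>A. f b x) * (\<Prod>i\<in>I - {a} - {b}. \<Sum>x\<in>A. f i x)"
    by (rule prod_two[OF I])
  also have "(\<Sum>x\<in>A. f a x) = 1"
  proof -
    have "(\<Sum>x\<in>A. f a x) = (\<Sum>x\<in>A. ind (x = u))" by (intro sum.cong) (auto simp: f_def ind_def)
    also have "\<dots> = 1" by (rule sum_ind_eq'[OF A u])
    finally show ?thesis .
  qed
  also have "(\<Sum>x\<in>A. f b x) = 1"
  proof -
    have "(\<Sum>x\<in>A. f b x) = (\<Sum>x\<in>A. ind (x = v))" using I by (intro sum.cong) (auto simp: f_def ind_def)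
    also have "\<dots> = 1" by (rule sum_ind_eq'[OF A v])
    finally show ?thesis .
  qed
  also have "(\<Prod>i\<in>I - {a} - {b}. \<Sum>x\<in>A. f i x) = (\<Prod>i\<in>I - {a} - {b}. real (card A))"
    by (intro prod.cong) (auto simp: f_def)
  also have "\<dots> = real (card A) ^ (card I - 2)"
    using I by (simp add: card_Diff_singleton_if numeral_2_eq_2)
  finally show ?thesis by simp
qed

lemma sum_PiE_two:
  fixes h :: "'b \<Rightarrow> 'b \<Rightarrow> real"
  assumes I: "finite I" "a \<in> I" "b \<in> I" "a \<noteq> b" and A: "finite A"
  shows "(\<Sum>c\<in>PiE I (\<lambda>_. A). h (c a) (c b)) = real (card A) ^ (card I - 2) * (\<Sum>u\<in>A. \<Sum>v\<in>A. h u v)"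
proof -
  have "(\<Sum>c\<in>PiE I (\<lambda>_. A). h (c a) (c b))
      = (\<Sum>c\<in>PiE I (\<lambda>_. A). \<Sum>u\<in>A. \<Sum>v\<in>A. h u v * (ind (u = c a) * ind (v = c b)))"
  proof (rule sum.cong[OF refl])
    fix c assume c: "c \<in> PiE I (\<lambda>_. A)"
    then have ca: "c a \<in> A" and cb: "c b \<in> A" using I by auto
    have "(\<Sum>u\<in>A. \<Sum>v\<in>A. h u v * (ind (u = c a) * ind (v = c b)))
        = (\<Sum>u\<in>A. ind (u = c a) * (\<Sum>v\<in>A. ind (v = c b) * h u v))"
      by (simp add: sum_distrib_left mult_ac)
    also have "\<dots> = (\<Sum>u\<in>A. ind (u = c a) * h u (c b))"
      by (simp add: sum_ind_eq[OF A cb])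
    also have "\<dots> = h (c a) (c b)" by (rule sum_ind_eq[OF A ca])
    finally show "h (c a) (c b) = (\<Sum>u\<in>A. \<Sum>v\<in>A. h u v * (ind (u = c a) * ind (v = c b)))" ..
  qed
  also have "\<dots> = (\<Sum>u\<in>A. \<Sum>v\<in>A. \<Sum>c\<in>PiE I (\<lambda>_. A). h u v * (ind (u = c a) * ind (v = c b)))"
    by (rule swap3[symmetric])
  also have "\<dots> = (\<Sum>u\<in>A. \<Sum>v\<in>A. h u v * real (card A) ^ (card I - 2))"
    by (intro sum.cong refl) (simp add: sum_distrib_left[symmetric] sum_PiE_pair_ind[OF I A])
  also have "\<dots> = real (card A) ^ (card I - 2) * (\<Sum>u\<in>A. \<Sum>v\<in>A. h u v)"
    by (simp add: sum_distrib_left sum_distrib_right mult.commute)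
  finally show ?thesis .
qed


lemma sum_gs_Suc: "(\<Sum>g\<in>gs (Suc n). f g) = (\<Sum>g\<in>gs n. f (1 # g)) + (\<Sum>g\<in>gs n. f ((-1) # g))"
  using one_ne_m1 by (simp add: sum_lsets_Suc)

lemma cheb_sum: "(\<Sum>g\<in>gs n. (2 * real (Nc g) - real n)^2) = real n * 2^n"
proof (induction n)
  case 0
  then show ?case by (simp add: Nc_def)
next
  case (Suc n)
  have "(\<Sum>g\<in>gs (Suc n). (2 * real (Nc g) - real (Suc n))^2)
      = (\<Sum>g\<in>gs n. (2 * real (Nc g) - real n + 1)^2) + (\<Sum>g\<in>gs n. (2 * real (Nc g) - real n - 1)^2)"
    using one_ne_m1 by (simp add: sum_gs_Suc algebra_simps del: mult_minus_left)
  also have "\<dots> = (\<Sum>g\<in>gs n. 2 * (2 * real (Nc g) - real n)^2 + 2)"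
    by (simp add: sum.distrib[symmetric] power2_eq_square algebra_simps)
  also have "\<dots> = 2 * (real n * 2^n) + 2 * 2^n"
    by (simp add: sum.distrib sum_distrib_left[symmetric] Suc.IH card_gs)
  finally show ?case by (simp add: algebra_simps)
qed

lemma tail_bound:
  assumes "2 * k0 \<le> n"
  shows "real (card {g\<in>gs n. Nc g < k0}) * (real n - 2 * real k0)^2 \<le> real n * 2^n"
proof -
  let ?T = "{g\<in>gs n. Nc g < k0}"
  have "real (card ?T) * (real n - 2 * real k0)^2 = (\<Sum>g\<in>?T. (real n - 2 * real k0)^2)" by simp
  also have "\<dots> \<le> (\<Sum>g\<in>?T. (2 * real (Nc g) - real n)^2)"
  proof (rule sum_mono)
    fix g assume "g \<in> ?T"
    then have "Nc g < k0" by simp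
    then have "0 \<le> real n - 2 * real k0" "real n - 2 * real k0 \<le> real n - 2 * real (Nc g)"
      using assms by auto
    then have "(real n - 2 * real k0)^2 \<le> (real n - 2 * real (Nc g))^2"
      by (intro power_mono) auto
    also have "\<dots> = (2 * real (Nc g) - real n)^2" by (simp add: power2_commute)
    finally show "(real n - 2 * real k0)^2 \<le> (2 * real (Nc g) - real n)^2" .
  qed
  also have "\<dots> \<le> (\<Sum>g\<in>gs n. (2 * real (Nc g) - real n)^2)"
    by (intro sum_mono2) auto
  also have "\<dots> = real n * 2^n" by (rule cheb_sum)
  finally show ?thesis .
qed


definition xc :: "nat \<Rightarrow> (nat \<Rightarrow> 3 list) \<Rightarrow> nat \<Rightarrow> nat \<Rightarrow> (3\<times>3) list" where
  "xc n c w1 w2 = zip (encn n w1) (vsub (c w2) (encn n w1))"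

definition Ecl :: "nat \<Rightarrow> (nat \<Rightarrow> 3 list) \<Rightarrow> nat \<Rightarrow> nat \<Rightarrow> (3\<times>3) list \<Rightarrow> real" where
  "Ecl n c w1 w2 x = ind (x = xc n c w1 w2)"

definition D1cl :: "nat \<Rightarrow> 3 list \<Rightarrow> nat \<Rightarrow> real" where
  "D1cl n ys w = ind (w = decn n ys)"

definition agr :: "3 list \<Rightarrow> (3\<times>3) list \<Rightarrow> bool" where
  "agr v ys2 = (\<forall>i<length ys2. snd (ys2 ! i) = 1 \<longrightarrow> fst (ys2 ! i) = v ! i)"

definition dec2 :: "nat \<Rightarrow> (nat \<Rightarrow> 3 list) \<Rightarrow> (3\<times>3) list \<Rightarrow> nat" where
  "dec2 K c ys2 = (if \<exists>w<K. agr (c w) ys2 then LEAST w. w < K \<and> agr (c w) ys2 else 0)"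

definition D2cl :: "nat \<Rightarrow> (nat \<Rightarrow> 3 list) \<Rightarrow> (3\<times>3) list \<Rightarrow> nat \<Rightarrow> real" where
  "D2cl K c ys2 w = ind (w = dec2 K c ys2)"

lemma dec2_lt: "K \<ge> 1 \<Longrightarrow> dec2 K c ys2 < K"
  unfolding dec2_def by (auto intro: LeastI2_wellorder)

lemma length_xc: "length (c w2) = n \<Longrightarrow> length (xc n c w1 w2) = n"
  by (simp add: xc_def)

lemma map_fst_xc: "length (c w2) = n \<Longrightarrow> map fst (xc n c w1 w2) = encn n w1"
  by (simp add: xc_def)

lemma cl_scheme:
  assumes K: "K \<ge> 1" and c: "\<And>w. w < K \<Longrightarrow> length (c w) = n"
  shows "classical_scheme n (3^n) K (Ecl n c) (D1cl n) (D2cl K c)"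
  unfolding classical_scheme_def
proof (intro conjI allI impI ballI)
  show "1 \<le> (3::nat)^n" by simp
  show "1 \<le> K" by (rule K)
  fix w1 w2 :: nat assume "w1 < 3^n" "w2 < K"
  then have l: "length (xc n c w1 w2) = n" using c length_xc by blast
  fix xs :: "(3\<times>3) list" show "0 \<le> Ecl n c w1 w2 xs" by (simp add: Ecl_def)
next
  fix w1 w2 :: nat assume "w1 < 3^n" "w2 < K"
  then have l: "length (xc n c w1 w2) = n" using c length_xc by blast
  show "(\<Sum>xs\<in>lists_n n. Ecl n c w1 w2 xs) = 1"
    unfolding Ecl_def by (rule sum_ind_eq') (use l in auto)
next
  fix ys :: "3 list" and w show "0 \<le> D1cl n ys w" by (simp add: D1cl_def)
next
  fix ys :: "3 list" assume "ys \<in> lists_n n"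
  then show "(\<Sum>w<3^n. D1cl n ys w) = 1" unfolding D1cl_def by (simp add: sum_ind_lt decn_lt)
next
  fix ys :: "(3\<times>3) list" and w show "0 \<le> D2cl K c ys w" by (simp add: D2cl_def)
next
  fix ys :: "(3\<times>3) list" assume "ys \<in> lists_n n"
  show "(\<Sum>w<K. D2cl K c ys w) = 1" unfolding D2cl_def by (rule sum_ind_lt[OF dec2_lt[OF K]])
qed

lemma cl_err1:
  assumes K: "K \<ge> 1" and c: "\<And>w. w < K \<Longrightarrow> length (c w) = n"
  shows "classical_err1 bc3 n (3^n) K (Ecl n c) (D1cl n) = 0"
proof -
  have inner: "(\<Sum>xs\<in>lists_n n. \<Sum>ys1\<in>lists_n n. \<Sum>ys2\<in>lists_n n.
        Ecl n c w1 w2 xs * chan_n bc3 xs ys1 ys2 * D1cl n ys1 w1) = 1"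
    if w1: "w1 < 3^n" and w2: "w2 < K" for w1 w2
  proof -
    have l: "length (xc n c w1 w2) = n" using c w2 length_xc by blast
    have "(\<Sum>xs\<in>lists_n n. \<Sum>ys1\<in>lists_n n. \<Sum>ys2\<in>lists_n n.
        Ecl n c w1 w2 xs * chan_n bc3 xs ys1 ys2 * D1cl n ys1 w1)
      = (\<Sum>xs\<in>lists_n n. Ecl n c w1 w2 xs * ((\<Sum>g\<in>gs n. D1cl n (map fst xs) w1) / 2^n))"
    proof (intro sum.cong refl)
      fix xs :: "(3\<times>3) list" assume "xs \<in> lists_n n"
      then have "length xs = n" by simp
      note ch = CH[OF this, of "\<lambda>ys1 ys2. D1cl n ys1 w1"]
      have "(\<Sum>ys1\<in>lists_n n. \<Sum>ys2\<in>lists_n n. Ecl n c w1 w2 xs * chan_n bc3 xs ys1 ys2 * D1cl n ys1 w1)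
         = Ecl n c w1 w2 xs * (\<Sum>ys1\<in>lists_n n. \<Sum>ys2\<in>lists_n n. chan_n bc3 xs ys1 ys2 * D1cl n ys1 w1)"
        by (simp add: sum_distrib_left mult.assoc)
      also have "\<dots> = Ecl n c w1 w2 xs * ((\<Sum>g\<in>gs n. D1cl n (map fst xs) w1) / 2^n)" unfolding ch ..
      finally show "(\<Sum>ys1\<in>lists_n n. \<Sum>ys2\<in>lists_n n. Ecl n c w1 w2 xs * chan_n bc3 xs ys1 ys2 * D1cl n ys1 w1)
         = Ecl n c w1 w2 xs * ((\<Sum>g\<in>gs n. D1cl n (map fst xs) w1) / 2^n)" .
    qed
    also have "\<dots> = (\<Sum>g\<in>gs n. D1cl n (map fst (xc n c w1 w2)) w1) / 2^n"
      unfolding Ecl_def by (rule sum_ind_eq) (use l in auto)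
    also have "\<dots> = 1"
      using c[OF w2] w1 by (simp add: map_fst_xc D1cl_def card_gs)
    finally show ?thesis .
  qed
  show ?thesis unfolding classical_err1_def using K by (simp add: inner)
qed


definition phi :: "nat \<Rightarrow> nat \<Rightarrow> (nat \<Rightarrow> 3 list) \<Rightarrow> nat \<Rightarrow> 3 list \<Rightarrow> real" where
  "phi k0 K c w2 g = ind (Nc g < k0) + ind (k0 \<le> Nc g) * (\<Sum>w'\<in>{..<K}-{w2}. ind (agrS g (c w') (c w2)))"

definition Phi :: "nat \<Rightarrow> nat \<Rightarrow> nat \<Rightarrow> (nat \<Rightarrow> 3 list) \<Rightarrow> real" where
  "Phi k0 K n c = (\<Sum>w2<K. \<Sum>g\<in>gs n. phi k0 K c w2 g)"

lemma phi_nonneg: "phi k0 K c w2 g \<ge> 0"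
  unfolding phi_def by (intro add_nonneg_nonneg mult_nonneg_nonneg sum_nonneg) auto

lemma nth_out2_xc:
  assumes "length (c w2) = n" "length g = n" "i < n"
  shows "out2 (xc n c w1 w2) g ! i = (g ! i * encn n w1 ! i + (c w2 ! i - encn n w1 ! i), g ! i)"
  using assms by (simp add: out2_def xc_def)

lemma agr_self:
  assumes "length (c ww) = n" "g \<in> gs n"
  shows "agr (c ww) (out2 (xc n c vv ww) g)"
  using assms by (auto simp: agr_def nth_out2_xc lsets_iff length_xc)

lemma agr_agrS:
  assumes "length (c ww) = n" "g \<in> gs n" "agr v (out2 (xc n c vv ww) g)"
  shows "agrS g v (c ww)"
  unfolding agrS_def
proof (intro allI impI)
  fix i assume i: "i < length g" and gi: "g ! i = 1"
  have ln: "length g = n" using assms by (simp add: lsets_iff)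
  have "fst (out2 (xc n c vv ww) g ! i) = v ! i"
    using assms(3) i gi ln assms(1) by (auto simp: agr_def nth_out2_xc length_xc)
  moreover have "fst (out2 (xc n c vv ww) g ! i) = c ww ! i"
    using i gi ln assms(1) by (simp add: nth_out2_xc)
  ultimately show "v ! i = c ww ! i" by simp
qed

lemma fail_le:
  assumes w2: "w2 < K" and c: "\<And>w. w < K \<Longrightarrow> length (c w) = n" and g: "g \<in> gs n"
  shows "1 - ind (w2 = dec2 K c (out2 (xc n c w1 w2) g)) \<le> phi k0 K c w2 g"
proof (cases "w2 = dec2 K c (out2 (xc n c w1 w2) g)")
  case True
  then show ?thesis using phi_nonneg by simp
next
  case False
  let ?ys = "out2 (xc n c w1 w2) g"
  have self: "agr (c w2) ?ys" using agr_self[where c=c and ww=w2 and n=n and g=g and vv=w1] c[OF w2] g by blast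
  then have ex: "\<exists>w<K. agr (c w) ?ys" using w2 by blast
  define d where "d = dec2 K c ?ys"
  have d: "d = (LEAST w. w < K \<and> agr (c w) ?ys)" using ex by (simp add: d_def dec2_def)
  have dK: "d < K \<and> agr (c d) ?ys" unfolding d by (rule LeastI_ex) (use ex in blast)
  have dw: "d \<noteq> w2" using False by (simp add: d_def)
  have agS: "agrS g (c d) (c w2)" using agr_agrS[where c=c and ww=w2 and n=n and g=g and vv=w1 and v="c d"] c[OF w2] g dK by blast
  have one: "1 \<le> (\<Sum>w'\<in>{..<K}-{w2}. ind (agrS g (c w') (c w2)))"
  proof -
    have "ind (agrS g (c d) (c w2)) \<le> (\<Sum>w'\<in>{..<K}-{w2}. ind (agrS g (c w') (c w2)))"
      by (rule member_le_sum) (use dK dw in auto)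
    then show ?thesis using agS by simp
  qed
  have "1 \<le> phi k0 K c w2 g"
  proof (cases "Nc g < k0")
    case True
    then show ?thesis unfolding phi_def
      by (simp add: sum_nonneg)
  next
    case False
    then show ?thesis unfolding phi_def using one by simp
  qed
  moreover have "ind (w2 = dec2 K c (out2 (xc n c w1 w2) g)) = 0" using False by (simp add: ind_def)
  ultimately show ?thesis by simp
qed

lemma cl_S2:
  assumes K: "K \<ge> 1" and c: "\<And>w. w < K \<Longrightarrow> length (c w) = n" and w2: "w2 < K"
  shows "(\<Sum>xs\<in>lists_n n. \<Sum>ys1\<in>lists_n n. \<Sum>ys2\<in>lists_n n.
        Ecl n c w1 w2 xs * chan_n bc3 xs ys1 ys2 * D2cl K c ys2 w2)
      = (\<Sum>g\<in>gs n. ind (w2 = dec2 K c (out2 (xc n c w1 w2) g))) / 2^n"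
proof -
  have l: "length (xc n c w1 w2) = n" using c w2 length_xc by blast
  have "(\<Sum>xs\<in>lists_n n. \<Sum>ys1\<in>lists_n n. \<Sum>ys2\<in>lists_n n.
      Ecl n c w1 w2 xs * chan_n bc3 xs ys1 ys2 * D2cl K c ys2 w2)
    = (\<Sum>xs\<in>lists_n n. Ecl n c w1 w2 xs * ((\<Sum>g\<in>gs n. D2cl K c (out2 xs g) w2) / 2^n))"
  proof (intro sum.cong refl)
    fix xs :: "(3\<times>3) list" assume "xs \<in> lists_n n"
    then have "length xs = n" by simp
    note ch = CH[OF this, of "\<lambda>ys1 ys2. D2cl K c ys2 w2"]
    have "(\<Sum>ys1\<in>lists_n n. \<Sum>ys2\<in>lists_n n. Ecl n c w1 w2 xs * chan_n bc3 xs ys1 ys2 * D2cl K c ys2 w2)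
       = Ecl n c w1 w2 xs * (\<Sum>ys1\<in>lists_n n. \<Sum>ys2\<in>lists_n n. chan_n bc3 xs ys1 ys2 * D2cl K c ys2 w2)"
      by (simp add: sum_distrib_left mult.assoc)
    also have "\<dots> = Ecl n c w1 w2 xs * ((\<Sum>g\<in>gs n. D2cl K c (out2 xs g) w2) / 2^n)" unfolding ch ..
    finally show "(\<Sum>ys1\<in>lists_n n. \<Sum>ys2\<in>lists_n n. Ecl n c w1 w2 xs * chan_n bc3 xs ys1 ys2 * D2cl K c ys2 w2)
       = Ecl n c w1 w2 xs * ((\<Sum>g\<in>gs n. D2cl K c (out2 xs g) w2) / 2^n)" .
  qed
  also have "\<dots> = (\<Sum>g\<in>gs n. D2cl K c (out2 (xc n c w1 w2) g) w2) / 2^n"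
    unfolding Ecl_def by (rule sum_ind_eq) (use l in auto)
  finally show ?thesis by (simp add: D2cl_def)
qed

lemma cl_err2:
  assumes K: "K \<ge> 1" and c: "\<And>w. w < K \<Longrightarrow> length (c w) = n"
  shows "classical_err2 bc3 n (3^n) K (Ecl n c) (D2cl K c) \<le> Phi k0 K n c / (real K * 2^n)"
    and "classical_err2 bc3 n (3^n) K (Ecl n c) (D2cl K c) \<ge> 0"
proof -
  define S where "S w1 w2 = (\<Sum>g\<in>gs n. ind (w2 = dec2 K c (out2 (xc n c w1 w2) g))) / 2^n" for w1 w2
  define M where "M = real (3^n) * real K"
  have Mpos: "M > 0" using K by (simp add: M_def)
  have e: "classical_err2 bc3 n (3^n) K (Ecl n c) (D2cl K c) = 1 - (\<Sum>w1<3^n. \<Sum>w2<K. S w1 w2) / M"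
    unfolding classical_err2_def M_def S_def using cl_S2[OF K c] by simp
  have "(\<Sum>w1<(3::nat)^n. \<Sum>w2<K. 1 - S w1 w2) = M - (\<Sum>w1<(3::nat)^n. \<Sum>w2<K. S w1 w2)"
    by (simp add: sum_subtractf M_def)
  then have "1 - (\<Sum>w1<3^n. \<Sum>w2<K. S w1 w2) / M = (\<Sum>w1<3^n. \<Sum>w2<K. 1 - S w1 w2) / M"
    using Mpos by (simp add: diff_divide_distrib)
  also have "\<dots> \<le> (\<Sum>w1<(3::nat)^n. \<Sum>w2<K. (\<Sum>g\<in>gs n. phi k0 K c w2 g) / 2^n) / M"
  proof (intro divide_right_mono sum_mono)
    fix w1 w2 assume w2: "w2 \<in> {..<K}"
    have "1 - S w1 w2 = (\<Sum>g\<in>gs n. 1 - ind (w2 = dec2 K c (out2 (xc n c w1 w2) g))) / 2^n"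
      by (simp add: S_def sum_subtractf card_gs field_simps)
    also have "\<dots> \<le> (\<Sum>g\<in>gs n. phi k0 K c w2 g) / 2^n"
      by (intro divide_right_mono sum_mono fail_le) (use w2 c in auto)
    finally show "1 - S w1 w2 \<le> (\<Sum>g\<in>gs n. phi k0 K c w2 g) / 2^n" .
  qed (use Mpos in auto)
  also have "\<dots> = real (3^n) * (Phi k0 K n c / 2^n) / M"
  proof -
    have "(\<Sum>w1<(3::nat)^n. \<Sum>w2<K. (\<Sum>g\<in>gs n. phi k0 K c w2 g) / 2^n) = real (3^n) * (Phi k0 K n c / 2^n)"
      by (simp add: Phi_def sum_divide_distrib)
    then show ?thesis by simp
  qed
  also have "\<dots> = Phi k0 K n c / (real K * 2^n)"
    using K by (simp add: M_def field_simps)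
  finally show "classical_err2 bc3 n (3^n) K (Ecl n c) (D2cl K c) \<le> Phi k0 K n c / (real K * 2^n)"
    using e by simp
  have "S w1 w2 \<le> 1" for w1 w2
  proof -
    have "(\<Sum>g\<in>gs n. ind (w2 = dec2 K c (out2 (xc n c w1 w2) g))) \<le> (\<Sum>g\<in>gs n. 1)"
      by (intro sum_mono) auto
    then show ?thesis by (simp add: S_def card_gs)
  qed
  then have "(\<Sum>w1<(3::nat)^n. \<Sum>w2<K. S w1 w2) \<le> (\<Sum>w1<(3::nat)^n. \<Sum>w2<K. 1)"
    by (intro sum_mono) auto
  then have "(\<Sum>w1<(3::nat)^n. \<Sum>w2<K. S w1 w2) / M \<le> 1"
    using Mpos by (simp add: M_def)
  then show "classical_err2 bc3 n (3^n) K (Ecl n c) (D2cl K c) \<ge> 0" using e by simp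
qed


abbreviation CB :: "nat \<Rightarrow> nat \<Rightarrow> (nat \<Rightarrow> 3 list) set" where
  "CB n K \<equiv> PiE {..<K} (\<lambda>_. lists_n n :: 3 list set)"

lemma card_CB: "card (CB n K) = (3^n)^K"
  by (simp add: card_PiE card_lists_n)

lemma finite_CB: "finite (CB n K)"
  by (intro finite_PiE) auto

lemma pair_avg:
  assumes g: "g \<in> gs n" and a: "a < K" and b: "b < K" and ab: "a \<noteq> b"
  shows "(\<Sum>c\<in>CB n K. ind (agrS g (c a) (c b))) = real (card (CB n K)) / 3^(Nc g)"
proof -
  have K2: "K \<ge> 2" using a b ab by linarith
  have "(\<Sum>c\<in>CB n K. ind (agrS g (c a) (c b)))
      = real (card (lists_n n :: 3 list set)) ^ (card {..<K} - 2) *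
        (\<Sum>u\<in>lists_n n. \<Sum>v\<in>lists_n n. ind (agrS g u v))"
    by (rule sum_PiE_two) (use a b ab in auto)
  also have "(\<Sum>u\<in>lists_n n. \<Sum>v\<in>(lists_n n :: 3 list set). ind (agrS g u v))
      = (\<Sum>u\<in>(lists_n n :: 3 list set). 3^n / 3^(Nc g))"
    by (intro sum.cong refl count_agr g) auto
  also have "\<dots> = 3^n * (3^n / 3^(Nc g))" by (simp add: card_lists_n)
  also have "real (card (lists_n n :: 3 list set)) ^ (card {..<K} - 2) * (3^n * (3^n / 3^(Nc g)))
      = ((3^n)^(K-2) * 3^n * 3^n) / 3^(Nc g)" by (simp add: card_lists_n)
  also have "((3::real)^n)^(K-2) * 3^n * 3^n = (3^n)^K"
  proof -
    have "K = (K - 2) + 2" using K2 by simp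
    then have "((3::real)^n)^K = (3^n)^(K-2) * (3^n)^2" by (metis power_add)
    then show ?thesis by (simp add: power2_eq_square mult.assoc)
  qed
  finally show ?thesis by (simp add: card_CB)
qed

lemma phi_avg:
  assumes g: "g \<in> gs n" and w2: "w2 < K"
  shows "(\<Sum>c\<in>CB n K. phi k0 K c w2 g) \<le> real (card (CB n K)) * (ind (Nc g < k0) + real K / 3^k0)"
proof -
  let ?C = "real (card (CB n K))"
  have "(\<Sum>c\<in>CB n K. phi k0 K c w2 g) = ?C * ind (Nc g < k0)
      + ind (k0 \<le> Nc g) * (\<Sum>w'\<in>{..<K}-{w2}. \<Sum>c\<in>CB n K. ind (agrS g (c w') (c w2)))"
    unfolding phi_def by (simp add: sum.distrib sum_distrib_left[symmetric] sum.swap[of _ "CB n K"])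
  also have "(\<Sum>w'\<in>{..<K}-{w2}. \<Sum>c\<in>CB n K. ind (agrS g (c w') (c w2)))
      = (\<Sum>w'\<in>{..<K}-{w2}. ?C / 3^(Nc g))"
    by (intro sum.cong refl pair_avg g) (use w2 in auto)
  also have "\<dots> = real (card ({..<K}-{w2})) * (?C / 3^(Nc g))" by simp
  also have "ind (k0 \<le> Nc g) * (real (card ({..<K}-{w2})) * (?C / 3^(Nc g))) \<le> ?C * (real K / 3^k0)"
  proof (cases "k0 \<le> Nc g")
    case True
    have "card ({..<K}-{w2}) \<le> card {..<K}" by (rule card_mono) auto
    then have c1: "real (card ({..<K}-{w2})) \<le> real K" by simp
    have c2: "?C / 3^(Nc g) \<le> ?C / 3^k0"
      using True by (intro divide_left_mono power_increasing) auto
    have "real (card ({..<K}-{w2})) * (?C / 3^(Nc g)) \<le> real K * (?C / 3^k0)"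
      using c1 c2 by (intro mult_mono) auto
    then show ?thesis using True by (simp add: mult_ac)
  next
    case False
    then show ?thesis by simp
  qed
  finally show ?thesis by (simp add: algebra_simps)
qed

lemma Phi_avg:
  shows "(\<Sum>c\<in>CB n K. Phi k0 K n c)
      \<le> real (card (CB n K)) * real K * (real (card {g\<in>gs n. Nc g < k0}) + 2^n * real K / 3^k0)"
proof -
  let ?C = "real (card (CB n K))"
  have "(\<Sum>c\<in>CB n K. Phi k0 K n c) = (\<Sum>w2<K. \<Sum>g\<in>gs n. \<Sum>c\<in>CB n K. phi k0 K c w2 g)"
    unfolding Phi_def by (rule swap3[symmetric])
  also have "\<dots> \<le> (\<Sum>w2<K. \<Sum>g\<in>gs n. ?C * (ind (Nc g < k0) + real K / 3^k0))"
    by (intro sum_mono phi_avg) auto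
  also have "\<dots> = real K * (?C * ((\<Sum>g\<in>gs n. ind (Nc g < k0)) + 2^n * (real K / 3^k0)))"
  proof -
    have "(\<Sum>g\<in>gs n. ?C * (ind (Nc g < k0) + real K / 3^k0))
        = ?C * ((\<Sum>g\<in>gs n. ind (Nc g < k0)) + 2^n * (real K / 3^k0))"
      by (simp add: sum_distrib_left[symmetric] sum.distrib card_gs)
    then show ?thesis by simp
  qed
  also have "(\<Sum>g\<in>gs n. ind (Nc g < k0)) = real (card {g\<in>gs n. Nc g < k0})"
    by (simp add: ind_def sum.If_cases Int_def conj_commute)
  finally show ?thesis by (simp add: mult_ac)
qed

lemma exists_code:
  "\<exists>c\<in>CB n K. Phi k0 K n c \<le> real K * (real (card {g\<in>gs n. Nc g < k0}) + 2^n * real K / 3^k0)"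
proof (rule ccontr)
  let ?B = "real K * (real (card {g\<in>gs n. Nc g < k0}) + 2^n * real K / 3^k0)"
  assume "\<not> ?thesis"
  then have lt: "\<And>c. c \<in> CB n K \<Longrightarrow> ?B < Phi k0 K n c" by auto
  have ln: "(lists_n n :: 3 list set) \<noteq> {}"
  proof -
    have "replicate n (0::3) \<in> lists_n n" by simp
    then show ?thesis by blast
  qed
  have ne: "CB n K \<noteq> {}" using ln by (simp add: PiE_eq_empty_iff)
  have "(\<Sum>c\<in>CB n K. ?B) < (\<Sum>c\<in>CB n K. Phi k0 K n c)"
    by (rule sum_strict_mono[OF finite_CB ne lt])
  also have "\<dots> \<le> real (card (CB n K)) * ?B" using Phi_avg by (simp add: mult.assoc)
  finally show False by simp
qed


lemma tail_frac:
  assumes s0: "0 \<le> \<sigma>" and s1: "\<sigma> < 1/2" and n: "n \<ge> 1" and k0: "k0 = nat \<lfloor>\<sigma> * real n\<rfloor>"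
  shows "real (card {g\<in>gs n. Nc g < k0}) / 2^n \<le> 1 / ((1 - 2*\<sigma>)^2 * real n)"
proof -
  have k0le: "real k0 \<le> \<sigma> * real n" using k0 s0 by simp
  define d where "d = real n - 2 * real k0"
  have dge: "d \<ge> (1 - 2*\<sigma>) * real n" using k0le by (simp add: d_def algebra_simps)
  have pos: "(1 - 2*\<sigma>) * real n > 0" using s1 n by simp
  then have dpos: "d > 0" using dge by linarith
  have "2 * k0 \<le> n"
  proof -
    have "real (2 * k0) \<le> real n" using dpos by (simp add: d_def)
    then show ?thesis by linarith
  qed
  from tail_bound[OF this] have tb: "real (card {g\<in>gs n. Nc g < k0}) * d^2 \<le> real n * 2^n"
    by (simp add: d_def)
  have "real (card {g\<in>gs n. Nc g < k0}) / 2^n \<le> real n / d^2"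
    using tb dpos by (simp add: field_simps)
  also have "\<dots> \<le> real n / ((1 - 2*\<sigma>) * real n)^2"
    using dge pos n by (intro divide_left_mono power_mono mult_pos_pos) auto
  also have "\<dots> = 1 / ((1 - 2*\<sigma>)^2 * real n)"
  proof -
    have nz: "real n \<noteq> 0" using n by simp
    have "((1 - 2*\<sigma>) * real n)^2 = ((1 - 2*\<sigma>)^2 * real n) * real n" by (simp add: power2_eq_square)
    then show ?thesis using nz by simp
  qed
  finally show ?thesis .
qed

lemma K_frac:
  assumes r0: "0 \<le> \<rho>" and sr: "\<rho> \<le> \<sigma>" and kk: "kk = nat \<lfloor>\<rho> * real n\<rfloor>" and k0: "k0 = nat \<lfloor>\<sigma> * real n\<rfloor>"
  shows "(3::real)^kk / 3^k0 \<le> 3 * (3 powr (\<rho> - \<sigma>))^n"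
proof -
  have a: "real kk \<le> \<rho> * real n" using kk r0 by simp
  have b: "real k0 \<ge> \<sigma> * real n - 1" using k0 r0 sr
    by (simp add: of_nat_nat)
  have "(3::real)^kk / 3^k0 = 3 powr (real kk - real k0)"
    by (simp add: powr_diff powr_realpow)
  also have "\<dots> \<le> 3 powr ((\<rho> - \<sigma>) * real n + 1)"
    using a b by (intro powr_mono) (auto simp: algebra_simps)
  also have "\<dots> = 3 * (3 powr (\<rho> - \<sigma>))^n"
    by (simp add: powr_add powr_powr powr_realpow[symmetric] mult.commute)
  finally show ?thesis .
qed


lemma rate_ge_floor:
  assumes r0: "0 \<le> \<rho>"
  shows "rate_ge (\<lambda>n. 3 ^ nat \<lfloor>\<rho> * real n\<rfloor>) (\<rho> * log 2 3)"
  unfolding rate_ge_def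
proof (intro allI impI)
  fix \<epsilon> :: real assume ep: "\<epsilon> > 0"
  obtain N :: nat where N: "real N > log 2 3 / \<epsilon>" using reals_Archimedean2 by blast
  have "log 2 (real (3 ^ nat \<lfloor>\<rho> * real n\<rfloor>)) / real n \<ge> \<rho> * log 2 3 - \<epsilon>" if n: "n \<ge> N + 1" for n
  proof -
    have npos: "real n > 0" using n by simp
    have l3: "log 2 3 > (0::real)" by simp
    have kk: "real (nat \<lfloor>\<rho> * real n\<rfloor>) \<ge> \<rho> * real n - 1" using r0 by (simp add: of_nat_nat)
    have "log 2 (real (3 ^ nat \<lfloor>\<rho> * real n\<rfloor>)) = real (nat \<lfloor>\<rho> * real n\<rfloor>) * log 2 3"
      by (simp add: log_nat_power)
    also have "\<dots> \<ge> (\<rho> * real n - 1) * log 2 3" using kk l3 by (intro mult_right_mono) auto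
    finally have A: "log 2 (real (3 ^ nat \<lfloor>\<rho> * real n\<rfloor>)) / real n \<ge> (\<rho> * real n - 1) * log 2 3 / real n"
      using npos by (intro divide_right_mono) auto
    have B: "(\<rho> * real n - 1) * log 2 3 / real n = \<rho> * log 2 3 - log 2 3 / real n"
      using npos by (simp add: field_simps)
    have C: "log 2 3 / real n \<le> \<epsilon>"
    proof -
      have "real n > log 2 3 / \<epsilon>" using N n by linarith
      then have "real n * \<epsilon> > log 2 3" using ep by (simp add: field_simps)
      then show ?thesis using npos by (simp add: field_simps)
    qed
    show ?thesis using A B C by linarith
  qed
  then show "eventually (\<lambda>n. log 2 (real (3 ^ nat \<lfloor>\<rho> * real n\<rfloor>)) / real n \<ge> \<rho> * log 2 3 - \<epsilon>) sequentially"
    unfolding eventually_sequentially by blast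
qed

lemma cl_achievable:
  assumes r0: "0 \<le> \<rho>" and r1: "\<rho> < 1/2"
  shows "achievable_classical bc3 (log 2 3, \<rho> * log 2 3)"
proof -
  define \<sigma> where "\<sigma> = (\<rho> + 1/2) / 2"
  have s0: "0 \<le> \<sigma>" and s1: "\<sigma> < 1/2" and rs: "\<rho> < \<sigma>" using r0 r1 by (auto simp: \<sigma>_def)
  define kk where "kk n = nat \<lfloor>\<rho> * real n\<rfloor>" for n :: nat
  define k0 where "k0 n = nat \<lfloor>\<sigma> * real n\<rfloor>" for n :: nat
  define K where "K n = (3::nat) ^ kk n" for n
  have K1: "K n \<ge> 1" for n by (simp add: K_def)
  define bnd where "bnd n = real (K n) * (real (card {g\<in>gs n. Nc g < k0 n}) + 2^n * real (K n) / 3^(k0 n))" for n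
  define cb where "cb n = (SOME c. c \<in> CB n (K n) \<and> Phi (k0 n) (K n) n c \<le> bnd n)" for n
  have cb: "cb n \<in> CB n (K n) \<and> Phi (k0 n) (K n) n (cb n) \<le> bnd n" for n
  proof -
    have ex: "\<exists>c. c \<in> CB n (K n) \<and> Phi (k0 n) (K n) n c \<le> bnd n"
      using exists_code[of "K n" n "k0 n"] unfolding bnd_def by blast
    show ?thesis unfolding cb_def by (rule someI_ex[OF ex])
  qed
  have len: "\<And>w. w < K n \<Longrightarrow> length (cb n w) = n" for n
    using cb[of n] by (auto simp: PiE_iff)
  define e2 where "e2 n = classical_err2 bc3 n (3^n) (K n) (Ecl n (cb n)) (D2cl (K n) (cb n))" for n
  define q :: real where "q = 3 powr (\<rho> - \<sigma>)"
  have q0: "0 < q" and q1: "q < 1" using rs by (auto simp: q_def intro: powr_less_one)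
  define ub where "ub n = 1 / ((1 - 2*\<sigma>)^2 * real n) + 3 * q^n" for n
  have e2nn: "e2 n \<ge> 0" for n unfolding e2_def by (rule cl_err2(2)[OF K1 len])
  have e2ub: "e2 n \<le> ub n" if n: "n \<ge> 1" for n
  proof -
    have "e2 n \<le> Phi (k0 n) (K n) n (cb n) / (real (K n) * 2^n)"
      unfolding e2_def by (rule cl_err2(1)[OF K1 len])
    also have "\<dots> \<le> bnd n / (real (K n) * 2^n)"
      using cb[of n] K1[of n] by (intro divide_right_mono) auto
    also have "\<dots> = real (card {g\<in>gs n. Nc g < k0 n}) / 2^n + real (K n) / 3^(k0 n)"
      using K1[of n] by (simp add: bnd_def field_simps)
    also have "\<dots> \<le> 1 / ((1 - 2*\<sigma>)^2 * real n) + 3 * q^n"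
    proof (rule add_mono)
      show "real (card {g\<in>gs n. Nc g < k0 n}) / 2^n \<le> 1 / ((1 - 2*\<sigma>)^2 * real n)"
        by (rule tail_frac[OF s0 s1 n]) (simp add: k0_def)
      have "real (K n) = (3::real) ^ kk n" by (simp add: K_def)
      then show "real (K n) / 3^(k0 n) \<le> 3 * q^n"
        using K_frac[OF r0 _ refl refl, of \<sigma> n] rs by (simp add: q_def kk_def k0_def)
    qed
    finally show ?thesis by (simp add: ub_def)
  qed
  have ublim: "ub \<longlonglongrightarrow> 0"
  proof -
    have "(\<lambda>n. (1 / (1 - 2*\<sigma>)^2) / real n) \<longlonglongrightarrow> 0" by (rule lim_const_over_n)
    moreover have "(\<lambda>n. 3 * q^n) \<longlonglongrightarrow> 0"
      using q0 q1 by (intro tendsto_mult_right_zero LIMSEQ_power_zero) auto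
    ultimately have "(\<lambda>n. (1 / (1 - 2*\<sigma>)^2) / real n + 3 * q^n) \<longlonglongrightarrow> 0 + 0"
      by (rule tendsto_add)
    then show ?thesis unfolding ub_def[abs_def] by simp
  qed
  have e2lim: "e2 \<longlonglongrightarrow> 0"
  proof (rule tendsto_sandwich[of "\<lambda>_. 0" _ _ ub])
    show "eventually (\<lambda>n. 0 \<le> e2 n) sequentially" using e2nn by simp
    show "eventually (\<lambda>n. e2 n \<le> ub n) sequentially"
      unfolding eventually_sequentially using e2ub by blast
  qed (auto intro: ublim)
  have e1: "classical_err1 bc3 n (3^n) (K n) (Ecl n (cb n)) (D1cl n) = 0" for n
    by (rule cl_err1[OF K1 len])
  show ?thesis
    unfolding achievable_classical_def fst_conv snd_conv
  proof (intro conjI)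
    show "0 \<le> log 2 (3::real)" by simp
    show "0 \<le> \<rho> * log 2 3" using r0 by simp
    show "\<exists>m1 m2 E D1 D2. (\<forall>n. classical_scheme n (m1 n) (m2 n) (E n) (D1 n) (D2 n)) \<and>
        (\<lambda>n. max (classical_err1 bc3 n (m1 n) (m2 n) (E n) (D1 n)) (classical_err2 bc3 n (m1 n) (m2 n) (E n) (D2 n)))
          \<longlonglongrightarrow> 0 \<and> rate_ge m1 (log 2 3) \<and> rate_ge m2 (\<rho> * log 2 3)"
    proof (intro exI conjI allI)
      show "classical_scheme n ((\<lambda>n. 3^n) n) (K n) ((\<lambda>n. Ecl n (cb n)) n) ((\<lambda>n. D1cl n) n) ((\<lambda>n. D2cl (K n) (cb n)) n)" for n
        using cl_scheme[OF K1 len] by simp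
      show "(\<lambda>n. max (classical_err1 bc3 n ((\<lambda>n. 3^n) n) (K n) ((\<lambda>n. Ecl n (cb n)) n) ((\<lambda>n. D1cl n) n))
          (classical_err2 bc3 n ((\<lambda>n. 3^n) n) (K n) ((\<lambda>n. Ecl n (cb n)) n) ((\<lambda>n. D2cl (K n) (cb n)) n))) \<longlonglongrightarrow> 0"
        using e2lim e2nn by (simp add: e1 e2_def[symmetric] max_absorb2)
      show "rate_ge (\<lambda>n. 3^n) (log 2 3)" by (rule rate_ge_pow3)
      show "rate_ge K (\<rho> * log 2 3)" unfolding K_def kk_def by (rule rate_ge_floor[OF r0])
    qed
  qed
qed


lemma cl_part: "is_sum_capacity (capacity_region bc3) (3/2 * log 2 3)"
  unfolding is_sum_capacity_def capacity_region_def
proof (intro conjI ballI)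
  define f where "f j = (log 2 3, (1/2 - inverse (real (Suc j)) / 2) * log 2 3)" for j
  have fin: "f j \<in> {R. achievable_classical bc3 R}" for j
  proof -
    have "inverse (real (Suc j)) \<le> 1" by (auto simp: inverse_le_1_iff)
    moreover have "inverse (real (Suc j)) > 0" by simp
    ultimately have "0 \<le> 1/2 - inverse (real (Suc j)) / 2" "1/2 - inverse (real (Suc j)) / 2 < 1/2" by auto
    then show ?thesis unfolding f_def by (simp add: cl_achievable)
  qed
  have "(\<lambda>j. (1/2 - inverse (real (Suc j)) / 2) * log 2 3) \<longlonglongrightarrow> (1/2 - 0 / 2) * log 2 (3::real)"
    by (intro tendsto_intros LIMSEQ_inverse_real_of_nat) simp_all
  then have "f \<longlonglongrightarrow> (log 2 3, (1/2) * log 2 3)"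
    unfolding f_def[abs_def] by (intro tendsto_Pair) auto
  then have "(log 2 3, (1/2) * log 2 3) \<in> closure {R. achievable_classical bc3 R}"
    using fin by (auto simp: closure_sequential)
  then show "\<exists>R\<in>closure {R. achievable_classical bc3 R}. fst R + snd R = 3/2 * log 2 3"
    by (intro bexI[of _ "(log 2 3, (1/2) * log 2 3)"]) auto
next
  fix R assume "R \<in> closure {R. achievable_classical bc3 R}"
  then show "fst R + snd R \<le> 3/2 * log 2 3"
    by (rule closure_halfplane[rotated]) (use cl_upper in blast)
qed

theorem theorem4:
  shows "semi_deterministic bc3 \<and>
         is_sum_capacity (capacity_region_ns bc3) (2 * log 2 3) \<and>
         is_sum_capacity (capacity_region bc3) (3/2 * log 2 3) \<and>
         (2 * log 2 3) / (3/2 * log 2 3) = (4/3 :: real)"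
proof (intro conjI)
  show "semi_deterministic bc3" by (rule semidet)
  show "is_sum_capacity (capacity_region_ns bc3) (2 * log 2 3)" by (rule ns_part)
  show "is_sum_capacity (capacity_region bc3) (3/2 * log 2 3)" by (rule cl_part)
  have gen: "(2 * x) / (3/2 * x) = (4/3 :: real)" if "x \<noteq> 0" for x
    using that by (simp add: field_simps)
  have "log 2 (3::real) > 0" by simp
  then have "log 2 (3::real) \<noteq> 0" by (rule less_imp_neq[symmetric])
  then show "(2 * log 2 3) / (3/2 * log 2 3) = (4/3 :: real)" by (rule gen)
qed


end
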